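(* Consider the impulsive time-delay system \[ \dot x(t)=f(t,x_t),\ t\neq t_k;\qquad \Delta x(t)=g(t,x_{t^-}),\ t=t_k;\qquad x_{t_0}=\phi, \] as described in the context. Suppose there exist $V_1\in\mathcal V_0$, $V_2\in\mathcal V_0^*$, functions $\alpha_1,\alpha_2,\alpha_3\in\mathcal K_\infty$, and constants $c\in\mathbb R$, $\varrho_1,\varrho_2,\mu\ge 0$, $\lambda>0$, $\kappa>0$ such that, for all $t\in\mathbb R^+$ and all $\psi\in\mathcal{PC}_\tau$: \begin{itemize} \item[(i)] $\alpha_1(\|\psi(0)\|)\le V_1(t,\psi(0))\le \alpha_2(\|\psi(0)\|)$ and $0\le V_2(t,\psi)\le \alpha_3(\|\psi\|_\tau)$; \item[(ii)] the functional $V(t,\psi):=V_1(t,\psi(0))+V_2(t,\psi)$ satisfies $\mathrm D^+V(t,\psi)\le -c\,V(t,\psi)$; \item[(iii)] $V_1(t,\psi(0)+g(t,\psi))\le \varrho_1 V_1(t^-,\psi(0))+\varrho_2\sup_{s\in[-\tau,0]}V_1(t^-+s,\psi(s))$, where $V_1(t^-+s,y):=\lim_{h\to0^+}V_1(t+s-h,y)$; \item[(iv)] $V_2(t,\psi)\le \kappa\sup_{s\in[-\tau,0]}V_1(t+s,\psi(s))$; \item[(v)] there is a constant $\sigma\in\mathbb R$ such that for all $t>s\ge t_0$, \[ -\sigma N(t,s)-(c-\lambda)(t-s)\le \mu, \] where $\sigma$ is determined as follows (and one of the four cases below holds): \begin{itemize} \item if $c>0$ and $\varrho_1\ge 1$: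 $\sigma=-\ln(\varrho_1+\varrho_2e^{c\tau})\ (\le 0)$; \item if $c>0$, $\varrho_1<1$ and $\varrho_1+[(1-\varrho_1)\kappa+\varrho_2]e^{c\tau}\ge 1$: $\sigma=-\ln\big(\varrho_1+[(1-\varrho_1)\kappa+\varrho_2]e^{c\tau}\big)\ (\le 0)$; \item if $c>0$, $\varrho_1<1$ and $\varrho_1+[(1-\varrho_1)\kappa+\varrho_2]e^{c\tau}<1$: $\sigma>0$ is a constant with $\varrho_1e^{\sigma}+[(1-\varrho_1)\kappa+\varrho_2]e^{c\tau}e^{\sigma N(t_k,t_k-\tau)}\le 1$ for all $k\in\mathbb N$; \item if $c\le 0$, $\varrho_1<1$ and $\varrho_1+(1-\varrho_1)\kappa+\varrho_2<1$: $\sigma>0$ is a constant with $\varrho_1e^{\sigma}+[(1-\varrho_1)\kappa+\varrho_2]e^{\sigma N(t_k,t_k-\tau)}\le 1$ for all $k\in\mathbb N$. \end{itemize} \end{itemize} Then the system is globally asymptotically stable.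
   Context: Let $\tau>0$ be the maximal delay, $\mathcal{PC}_\tau=\mathcal{PC}([-\tau,0],\mathbb R^n)$ the space of piecewise right-continuous functions $[-\tau,0]\to\mathbb R^n$ with norm $\|\varphi\|_\tau=\sup_{s\in[-\tau,0]}\|\varphi(s)\|$ ($\|\cdot\|$ Euclidean). For a piecewise right-continuous $x:[-\tau,\infty)\to\mathbb R^n$, $x_t(s)=x(t+s)$, and $x_{t^-}(s)=x(t+s)$ for $s\in[-\tau,0)$, $x_{t^-}(0)=x(t^-)$ (left limit). $\Delta x(t)=x(t)-x(t^-)$; solutions are right-continuous at impulse times. The maps $f,g:\mathbb R^+\times\mathcal{PC}_\tau\to\mathbb R^n$ satisfy $f(t,0)=g(t,0)=0$, and are assumed regular enough that for every $t_0\ge0$ and $\phi\in\mathcal{PC}_\tau$ there is a unique solution $x(t)=x(t,t_0,\phi)$ on a maximal interval $[t_0-\tau,t_0+\Gamma)$, $0<\Gamma\le\infty$, and that solutions which remain bounded extend globally. The impulse times $t_0<t_1<t_2<\cdots$ form a fixed strictly increasing sequence with $t_k\to\infty$. $N(t,s)$ is the number of impulse times in $(s,t]$ for $t>s\ge t_0$. A function $\alpha:\mathbb R^+\to\mathbb R^+$ is of class $\mathcal K_\infty$ if continuous, strictly increasing, unbounded, with $\alpha(0)=0$. Class $\mathcal V_0$: functions $V:\mathbb R^+\times\mathbb R^n\to\mathbb R^+$ such that for every piecewise right-continuous $x$, $t\mapsto V(t,x(t))$ is piecewise right-continuous and can be discontinuous at $t^*$ only if $x$ is discontinuous at $t^*$.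 Class $\mathcal V_0^*$: functionals $V:\mathbb R^+\times\mathcal{PC}_\tau\to\mathbb R^+$ such that for every piecewise right-continuous $x:[-\tau,\infty)\to\mathbb R^n$, $t\mapsto V(t,x_t)$ is continuous, and $V$ is locally Lipschitz in its second argument. The upper right-hand derivative along the system is $\mathrm D^+V(t,\psi)=\limsup_{h\to0^+}\frac{V(t+h,x^{(t,\psi)}_{t+h})-V(t,\psi)}{h}$, where $x^{(t,\psi)}$ is the solution with $x_t=\psi$ and $h$ is small enough that $(t,t+h)$ contains no impulse time. Global asymptotic stability (GAS): the trivial solution is stable (for every $\varepsilon>0$ there is $\delta>0$ with $\|\phi\|_\tau<\delta\Rightarrow\|x(t,t_0,\phi)\|<\varepsilon$ for all $t\ge t_0$) and $\lim_{t\to\infty}\|x(t,t_0,\phi)\|=0$ for every $\phi\in\mathcal{PC}_\tau$. *)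

theory Defs
  imports "HOL-Analysis.Analysis"
begin

definition pwrc_on :: "real \<Rightarrow> real \<Rightarrow> (real \<Rightarrow> 'a::topological_space) \<Rightarrow> bool" where
  "pwrc_on a b x \<longleftrightarrow>
     (\<forall>t\<in>{a..<b}. continuous (at_right t) x) \<and>
     (\<forall>t\<in>{a<..b}. \<exists>l. (x \<longlongrightarrow> l) (at_left t)) \<and>
     finite {t\<in>{a..b}. \<not> continuous (at t within {a..b}) x}"

definition PC :: "real \<Rightarrow> (real \<Rightarrow> 'a::real_normed_vector) set" where
  "PC \<tau> = {\<psi>. pwrc_on (-\<tau>) 0 \<psi> \<and> (\<forall>s. s \<notin> {-\<tau>..0} \<longrightarrow> \<psi> s = 0)}"

definition normtau :: "real \<Rightarrow> (real \<Rightarrow> 'a::real_normed_vector) \<Rightarrow> real" where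
  "normtau \<tau> \<psi> = (SUP s\<in>{-\<tau>..0}. norm (\<psi> s))"

definition seg :: "real \<Rightarrow> (real \<Rightarrow> 'a::real_normed_vector) \<Rightarrow> real \<Rightarrow> (real \<Rightarrow> 'a)" where
  "seg \<tau> x t = (\<lambda>s. if -\<tau> \<le> s \<and> s \<le> 0 then x (t + s) else 0)"

definition segm :: "real \<Rightarrow> (real \<Rightarrow> 'a::real_normed_vector) \<Rightarrow> real \<Rightarrow> (real \<Rightarrow> 'a)" where
  "segm \<tau> x t = (\<lambda>s. if -\<tau> \<le> s \<and> s < 0 then x (t + s)
                     else if s = 0 then Lim (at_left t) x else 0)"

definition Nimp :: "(nat \<Rightarrow> real) \<Rightarrow> real \<Rightarrow> real \<Rightarrow> real" where
  "Nimp tk t s = real (card {k. s < tk k \<and> tk k \<le> t})"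

definition is_sol ::
  "(real \<Rightarrow> (real \<Rightarrow> 'a::real_normed_vector) \<Rightarrow> 'a) \<Rightarrow> (real \<Rightarrow> (real \<Rightarrow> 'a) \<Rightarrow> 'a) \<Rightarrow>
   real \<Rightarrow> (nat \<Rightarrow> real) \<Rightarrow> real \<Rightarrow> (real \<Rightarrow> 'a) \<Rightarrow> ereal \<Rightarrow> (real \<Rightarrow> 'a) \<Rightarrow> bool" where
  "is_sol f g \<tau> tk t0 \<phi> T x \<longleftrightarrow>
     ereal t0 < T \<and>
     seg \<tau> x t0 = \<phi> \<and>
     (\<forall>b. t0 - \<tau> \<le> b \<and> ereal b < T \<longrightarrow> pwrc_on (t0 - \<tau>) b x) \<and>
     (\<forall>t. t0 \<le> t \<and> ereal t < T \<longrightarrow>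
        (x has_vector_derivative f t (seg \<tau> x t)) (at t within {t..})) \<and>
     (\<forall>t. t0 < t \<and> ereal t < T \<and> t \<notin> range tk \<longrightarrow> isCont x t) \<and>
     (\<forall>k. t0 < tk k \<and> ereal (tk k) < T \<longrightarrow>
        x (tk k) = Lim (at_left (tk k)) x + g (tk k) (segm \<tau> x (tk k)))"

definition is_max_sol ::
  "(real \<Rightarrow> (real \<Rightarrow> 'a::real_normed_vector) \<Rightarrow> 'a) \<Rightarrow> (real \<Rightarrow> (real \<Rightarrow> 'a) \<Rightarrow> 'a) \<Rightarrow>
   real \<Rightarrow> (nat \<Rightarrow> real) \<Rightarrow> real \<Rightarrow> (real \<Rightarrow> 'a) \<Rightarrow> ereal \<Rightarrow> (real \<Rightarrow> 'a) \<Rightarrow> bool" where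
  "is_max_sol f g \<tau> tk t0 \<phi> T x \<longleftrightarrow>
     is_sol f g \<tau> tk t0 \<phi> T x \<and> (\<forall>T' y. is_sol f g \<tau> tk t0 \<phi> T' y \<longrightarrow> T' \<le> T)"

definition class_Kinf :: "(real \<Rightarrow> real) \<Rightarrow> bool" where
  "class_Kinf \<alpha> \<longleftrightarrow> continuous_on {0..} \<alpha> \<and> strict_mono_on {0..} \<alpha> \<and>
     (\<forall>M. \<exists>r\<ge>0. \<alpha> r > M) \<and> \<alpha> 0 = 0"

definition class_V0 :: "(real \<Rightarrow> 'a::real_normed_vector \<Rightarrow> real) \<Rightarrow> bool" where
  "class_V0 V \<longleftrightarrow> (\<forall>t\<ge>0. \<forall>y. V t y \<ge> 0) \<and>
     (\<forall>x::real \<Rightarrow> 'a. (\<forall>b\<ge>0. pwrc_on 0 b x) \<longrightarrow>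
        (\<forall>b\<ge>0. pwrc_on 0 b (\<lambda>t. V t (x t))) \<and>
        (\<forall>t\<ge>0. continuous (at t within {0..}) x \<longrightarrow>
                continuous (at t within {0..}) (\<lambda>t. V t (x t))))"

definition class_V0star :: "real \<Rightarrow> (real \<Rightarrow> (real \<Rightarrow> 'a::real_normed_vector) \<Rightarrow> real) \<Rightarrow> bool" where
  "class_V0star \<tau> V \<longleftrightarrow> (\<forall>t\<ge>0. \<forall>\<psi>\<in>PC \<tau>. V t \<psi> \<ge> 0) \<and>
     (\<forall>x::real \<Rightarrow> 'a. (\<forall>b\<ge>-\<tau>. pwrc_on (-\<tau>) b x) \<longrightarrow>
        continuous_on {0..} (\<lambda>t. V t (seg \<tau> x t))) \<and>
     (\<forall>t\<ge>0. \<forall>\<psi>\<in>PC \<tau>. \<exists>r>0. \<exists>L. \<forall>\<phi>1\<in>PC \<tau>. \<forall>\<phi>2\<in>PC \<tau>.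
        normtau \<tau> (\<lambda>s. \<phi>1 s - \<psi> s) < r \<and> normtau \<tau> (\<lambda>s. \<phi>2 s - \<psi> s) < r \<longrightarrow>
        \<bar>V t \<phi>1 - V t \<phi>2\<bar> \<le> L * normtau \<tau> (\<lambda>s. \<phi>1 s - \<phi>2 s))"

text \<open>Convention: V_1 is only given on R^+; at negative times (needed in the
suprema over [t-tau,t]) it is extended constantly, V_1(t,y) := V_1(0,y) for t<0.\<close>
definition V1ext :: "(real \<Rightarrow> 'a \<Rightarrow> real) \<Rightarrow> real \<Rightarrow> 'a \<Rightarrow> real" where
  "V1ext V r y = V (max r 0) y"

definition V1left :: "(real \<Rightarrow> 'a \<Rightarrow> real) \<Rightarrow> real \<Rightarrow> 'a \<Rightarrow> real" where
  "V1left V r y = Lim (at_left r) (\<lambda>u. V1ext V u y)"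

end

theory Submission
  imports Defs
begin



lemma ev_within_self: "eventually (\<lambda>y. y \<in> S) (at t within S)"
  by (simp add: eventually_at_filter)

lemma pwrc_cong:
  assumes "pwrc_on a b x" "\<And>t. t \<in> {a..b} \<Longrightarrow> y t = x t"
  shows "pwrc_on a b y"
proof -
  have R: "continuous (at_right t) y" if "t \<in> {a..<b}" for t
  proof -
    have "continuous (at_right t) x" using assms(1) that unfolding pwrc_on_def by auto
    hence "(x \<longlongrightarrow> x t) (at_right t)" by (simp add: continuous_within)
    moreover have "eventually (\<lambda>s. x s = y s) (at_right t)"
      using eventually_at_right_real[of t b] that assms(2)
      by (auto elim!: eventually_mono)
    ultimately have "(y \<longlongrightarrow> x t) (at_right t)" using tendsto_cong by blast
    thus ?thesis using assms(2)[of t] that by (simp add: continuous_within)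
  qed
  have L: "\<exists>l. (y \<longlongrightarrow> l) (at_left t)" if "t \<in> {a<..b}" for t
  proof -
    have "\<exists>l. (x \<longlongrightarrow> l) (at_left t)" using assms(1) that unfolding pwrc_on_def by blast
    then obtain l where "(x \<longlongrightarrow> l) (at_left t)" by blast
    moreover have "eventually (\<lambda>s. x s = y s) (at_left t)"
      using eventually_at_left_real[of a t] that assms(2)
      by (auto elim!: eventually_mono)
    ultimately show ?thesis using tendsto_cong by blast
  qed
  have "{t\<in>{a..b}. \<not> continuous (at t within {a..b}) y} = {t\<in>{a..b}. \<not> continuous (at t within {a..b}) x}"
  proof -
    have "continuous (at t within {a..b}) y = continuous (at t within {a..b}) x" if "t \<in> {a..b}" for t
    proof -
      have "eventually (\<lambda>s. x s = y s) (at t within {a..b})"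
        using ev_within_self[of "{a..b}" t] assms(2) by (auto elim!: eventually_mono)
      thus ?thesis using that assms(2)[of t] by (simp add: continuous_within tendsto_cong)
    qed
    thus ?thesis by auto
  qed
  thus ?thesis using assms(1) R L unfolding pwrc_on_def by auto
qed




lemma shift_at_left: "filterlim (\<lambda>u. t + u) (at_left (t + s)) (at_left (s::real))"
  unfolding filterlim_at
  by (auto intro!: tendsto_eq_intros simp: eventually_at_filter)

lemma shift_at_right: "filterlim (\<lambda>u. t + u) (at_right (t + s)) (at_right (s::real))"
  unfolding filterlim_at
  by (auto intro!: tendsto_eq_intros simp: eventually_at_filter)

lemma pwrc_restrict:
  assumes "pwrc_on a b x" "a \<le> a'" "b' \<le> b"
  shows "pwrc_on a' b' x"
proof -
  have "{t\<in>{a'..b'}. \<not> continuous (at t within {a'..b'}) x} \<subseteq> {t\<in>{a..b}. \<not> continuous (at t within {a..b}) x}"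
    using assms(2,3) by (auto intro: continuous_within_subset)
  then show ?thesis using assms unfolding pwrc_on_def by (auto intro: finite_subset)
qed

lemma cont_pwrc:
  assumes "continuous_on UNIV y"
  shows "pwrc_on a b y"
proof -
  have ic: "isCont y t" for t using assms by (simp add: continuous_on_eq_continuous_at)
  have E: "{t\<in>{a..b}. \<not> continuous (at t within {a..b}) y} = {}"
    using ic by (auto intro: continuous_within_subset[of _ UNIV])
  have L: "\<exists>l. (y \<longlongrightarrow> l) (at_left t)" for t
    using ic[of t] by (auto simp: isCont_def intro: tendsto_mono[OF at_le])
  have R: "continuous (at_right t) y" for t
    using ic[of t] by (auto intro: continuous_within_subset[of _ UNIV])
  show ?thesis unfolding pwrc_on_def E using L R by simp
qed

lemma pwrc_shift:
  assumes "pwrc_on a b x"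
  shows "pwrc_on (a - t) (b - t) (\<lambda>s. x (t + s))"
proof -
  have R: "continuous (at_right s) (\<lambda>s. x (t + s))" if "s \<in> {a-t..<b-t}" for s
  proof -
    have "continuous (at_right (t+s)) x" using assms that unfolding pwrc_on_def by auto
    hence "(x \<longlongrightarrow> x (t+s)) (at_right (t+s))" by (simp add: continuous_within)
    from filterlim_compose[OF this shift_at_right] show ?thesis by (simp add: continuous_within o_def)
  qed
  have L: "\<exists>l. ((\<lambda>s. x (t + s)) \<longlongrightarrow> l) (at_left s)" if "s \<in> {a-t<..b-t}" for s
  proof -
    have "\<exists>l. (x \<longlongrightarrow> l) (at_left (t+s))" using assms that unfolding pwrc_on_def by auto
    then obtain l where "(x \<longlongrightarrow> l) (at_left (t+s))" by blast
    from filterlim_compose[OF this shift_at_left] show ?thesis by auto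
  qed
  have "{s\<in>{a-t..b-t}. \<not> continuous (at s within {a-t..b-t}) (\<lambda>s. x (t + s))}
     \<subseteq> (\<lambda>u. u - t) ` {u\<in>{a..b}. \<not> continuous (at u within {a..b}) x}"
  proof
    fix s assume s: "s \<in> {s\<in>{a-t..b-t}. \<not> continuous (at s within {a-t..b-t}) (\<lambda>s. x (t + s))}"
    have "\<not> continuous (at (t+s) within {a..b}) x"
    proof
      assume c: "continuous (at (t+s) within {a..b}) x"
      have "continuous (at s within {a-t..b-t}) ((\<lambda>s. t + s))" by (intro continuous_intros)
      moreover have "(\<lambda>s. t + s) ` {a-t..b-t} = {a..b}"
        using image_add_atLeastAtMost[of t "a-t" "b-t"] by (simp add: add.commute)
      ultimately have "continuous (at s within {a-t..b-t}) (x \<circ> (\<lambda>s. t + s))"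
        using c by (intro continuous_within_compose) auto
      with s show False by (simp add: o_def)
    qed
    with s show "s \<in> (\<lambda>u. u - t) ` {u\<in>{a..b}. \<not> continuous (at u within {a..b}) x}"
      by (intro image_eqI[of _ _ "t+s"]) auto
  qed
  moreover have "finite {u\<in>{a..b}. \<not> continuous (at u within {a..b}) x}" using assms unfolding pwrc_on_def by auto
  ultimately show ?thesis using R L unfolding pwrc_on_def by (meson finite_imageI finite_subset)
qed




lemma ev_nhds_open: "open S \<Longrightarrow> t \<in> S \<Longrightarrow> eventually (\<lambda>s. s \<in> S) (nhds t)"
  by (rule eventually_nhds_in_open)

lemma ev_at_left_less: "eventually (\<lambda>y. y < (t::real)) (at_left t)"
  by (auto simp: eventually_at_filter)

lemma pwrc_ext:
  fixes x :: "real \<Rightarrow> 'a::real_normed_vector"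
  assumes px: "pwrc_on a b0 x" and "c \<le> a" "a \<le> b0"
  shows "pwrc_on c b (\<lambda>t. if t < a then 0 else if t < b0 then x t else L)"
    (is "pwrc_on c b ?e")
proof -
  have R: "continuous (at_right t) ?e" if "t \<in> {c..<b}" for t
  proof (cases "t < a")
    case True
    have "eventually (\<lambda>s. 0 = ?e s) (at_right t)"
      using eventually_at_right_real[OF True] by (auto elim!: eventually_mono)
    hence "(?e \<longlongrightarrow> 0) (at_right t)" by (rule Lim_transform_eventually[OF tendsto_const])
    thus ?thesis using True by (simp add: continuous_within)
  next
    case False
    show ?thesis
    proof (cases "t < b0")
      case True
      have "continuous (at_right t) x" using px False True unfolding pwrc_on_def by auto
      hence "(x \<longlongrightarrow> x t) (at_right t)" by (simp add: continuous_within)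
      moreover have "eventually (\<lambda>s. x s = ?e s) (at_right t)"
        using eventually_at_right_real[OF True] False by (auto elim!: eventually_mono)
      ultimately have "(?e \<longlongrightarrow> x t) (at_right t)" by (rule Lim_transform_eventually)
      thus ?thesis using True False by (simp add: continuous_within)
    next
      case False2: False
      have "eventually (\<lambda>s. L = ?e s) (at_right t)"
        using eventually_at_right_less[of t] False False2 by (auto elim!: eventually_mono)
      hence "(?e \<longlongrightarrow> L) (at_right t)" by (rule Lim_transform_eventually[OF tendsto_const])
      thus ?thesis using False False2 by (simp add: continuous_within)
    qed
  qed
  have Lm: "\<exists>l. (?e \<longlongrightarrow> l) (at_left t)" if "t \<in> {c<..b}" for t
  proof (cases "t \<le> a")
    case True
    have "eventually (\<lambda>s. 0 = ?e s) (at_left t)"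
      using ev_at_left_less[of t] True by (auto elim!: eventually_mono)
    hence "(?e \<longlongrightarrow> 0) (at_left t)" by (rule Lim_transform_eventually[OF tendsto_const])
    thus ?thesis by blast
  next
    case False
    show ?thesis
    proof (cases "t \<le> b0")
      case True
      have "\<exists>l. (x \<longlongrightarrow> l) (at_left t)" using px False True unfolding pwrc_on_def by auto
      then obtain l where "(x \<longlongrightarrow> l) (at_left t)" by blast
      moreover have "eventually (\<lambda>s. x s = ?e s) (at_left t)"
        using eventually_at_left_real[of a t] False True by (auto elim!: eventually_mono)
      ultimately have "(?e \<longlongrightarrow> l) (at_left t)" by (rule Lim_transform_eventually)
      thus ?thesis by blast
    next
      case False2: False
      have "eventually (\<lambda>s. L = ?e s) (at_left t)"
        using eventually_at_left_real[of b0 t] False False2 \<open>a \<le> b0\<close> by (auto elim!: eventually_mono)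
      hence "(?e \<longlongrightarrow> L) (at_left t)" by (rule Lim_transform_eventually[OF tendsto_const])
      thus ?thesis by blast
    qed
  qed
  let ?D = "{u\<in>{a..b0}. \<not> continuous (at u within {a..b0}) x}"
  have sub: "{t\<in>{c..b}. \<not> continuous (at t within {c..b}) ?e} \<subseteq> {a, b0} \<union> ?D"
  proof
    fix t assume t: "t \<in> {t\<in>{c..b}. \<not> continuous (at t within {c..b}) ?e}"
    show "t \<in> {a, b0} \<union> ?D"
    proof (rule ccontr)
      assume nt: "t \<notin> {a, b0} \<union> ?D"
      have "isCont ?e t"
      proof (cases "t < a")
        case True
        have "eventually (\<lambda>s. s \<in> {..<a}) (nhds t)" using True by (intro ev_nhds_open) auto
        hence "eventually (\<lambda>s. (\<lambda>_. 0) s = ?e s) (nhds t)" by (auto elim!: eventually_mono)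
        thus ?thesis using isCont_cong[of "\<lambda>_. 0" ?e t] by simp
      next
        case False
        show ?thesis
        proof (cases "t < b0")
          case True
          with False nt have at: "a < t" by auto
          from nt at True have "continuous (at t within {a..b0}) x" by auto
          hence ic: "isCont x t" using at_within_Icc_at[OF at True] by simp
          have "eventually (\<lambda>s. s \<in> {a<..<b0}) (nhds t)" using at True by (intro ev_nhds_open) auto
          hence "eventually (\<lambda>s. x s = ?e s) (nhds t)" by (auto elim!: eventually_mono)
          thus ?thesis using isCont_cong[of x ?e t] ic by simp
        next
          case False2: False
          with nt have bt: "b0 < t" by auto
          have "eventually (\<lambda>s. s \<in> {b0<..}) (nhds t)" using bt by (intro ev_nhds_open) auto
          hence "eventually (\<lambda>s. (\<lambda>_. L) s = ?e s) (nhds t)" using \<open>a \<le> b0\<close>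
            by (auto elim!: eventually_mono)
          thus ?thesis using isCont_cong[of "\<lambda>_. L" ?e t] by simp
        qed
      qed
      hence "continuous (at t within {c..b}) ?e" by (rule continuous_within_subset) auto
      with t show False by auto
    qed
  qed
  have "finite ?D" using px unfolding pwrc_on_def by auto
  hence "finite ({a, b0} \<union> ?D)" by simp
  hence "finite {t\<in>{c..b}. \<not> continuous (at t within {c..b}) ?e}"
    by (rule finite_subset[OF sub])
  thus ?thesis using R Lm unfolding pwrc_on_def by blast
qed




lemma pwrc_local_bound:
  fixes x :: "real \<Rightarrow> 'a::real_normed_vector"
  assumes px: "pwrc_on a b x" and t: "t \<in> {a..b}"
  shows "\<exists>e>0. \<exists>M. \<forall>s\<in>{a..b}. dist s t < e \<longrightarrow> norm (x s) \<le> M"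
proof -
  obtain e1 M1 where e1: "e1 > 0" and M1: "\<forall>s\<in>{a..b}. t < s \<and> s < t + e1 \<longrightarrow> norm (x s) \<le> M1"
  proof (cases "t < b")
    case True
    have "continuous (at_right t) x" using px t True unfolding pwrc_on_def by auto
    hence "(x \<longlongrightarrow> x t) (at_right t)" by (simp add: continuous_within)
    hence "eventually (\<lambda>s. dist (x s) (x t) < 1) (at_right t)" by (rule tendstoD) simp
    then obtain bb where bb: "bb > t" "\<forall>s>t. s < bb \<longrightarrow> dist (x s) (x t) < 1"
      unfolding eventually_at_right_field by blast
    show ?thesis
    proof (rule that[of "bb - t" "norm (x t) + 1"])
      show "bb - t > 0" using bb by simp
      show "\<forall>s\<in>{a..b}. t < s \<and> s < t + (bb - t) \<longrightarrow> norm (x s) \<le> norm (x t) + 1"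
      proof (intro ballI impI)
        fix s assume "s \<in> {a..b}" "t < s \<and> s < t + (bb - t)"
        hence "dist (x s) (x t) < 1" using bb by auto
        thus "norm (x s) \<le> norm (x t) + 1" using norm_triangle_ineq2[of "x s" "x t"]
          by (simp add: dist_norm)
      qed
    qed
  next
    case False
    show ?thesis by (rule that[of 1 0]) (use False in auto)
  qed
  obtain e2 M2 where e2: "e2 > 0" and M2: "\<forall>s\<in>{a..b}. t - e2 < s \<and> s < t \<longrightarrow> norm (x s) \<le> M2"
  proof (cases "a < t")
    case True
    have "\<exists>l. (x \<longlongrightarrow> l) (at_left t)" using px t True unfolding pwrc_on_def by auto
    then obtain l where "(x \<longlongrightarrow> l) (at_left t)" by blast
    hence "eventually (\<lambda>s. dist (x s) l < 1) (at_left t)" by (rule tendstoD) simp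
    then obtain bb where bb: "bb < t" "\<forall>s>bb. s < t \<longrightarrow> dist (x s) l < 1"
      unfolding eventually_at_left_field by blast
    show ?thesis
    proof (rule that[of "t - bb" "norm l + 1"])
      show "t - bb > 0" using bb by simp
      show "\<forall>s\<in>{a..b}. t - (t - bb) < s \<and> s < t \<longrightarrow> norm (x s) \<le> norm l + 1"
      proof (intro ballI impI)
        fix s assume "s \<in> {a..b}" "t - (t - bb) < s \<and> s < t"
        hence "dist (x s) l < 1" using bb by auto
        thus "norm (x s) \<le> norm l + 1" using norm_triangle_ineq2[of "x s" l]
          by (simp add: dist_norm)
      qed
    qed
  next
    case False
    show ?thesis by (rule that[of 1 0]) (use False t in auto)
  qed
  have main: "\<forall>s\<in>{a..b}. dist s t < min e1 e2 \<longrightarrow> norm (x s) \<le> max (norm (x t)) (max M1 M2)"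
  proof (intro ballI impI)
    fix s assume s: "s \<in> {a..b}" "dist s t < min e1 e2"
    consider "s = t" | "t < s" | "s < t" by linarith
    thus "norm (x s) \<le> max (norm (x t)) (max M1 M2)"
    proof cases
      case 2
      hence "norm (x s) \<le> M1" using M1 s by (auto simp: dist_real_def)
      thus ?thesis by simp
    next
      case 3
      hence "norm (x s) \<le> M2" using M2 s by (auto simp: dist_real_def)
      thus ?thesis by simp
    qed simp
  qed
  have "min e1 e2 > 0" using e1 e2 by simp
  with main show ?thesis by blast
qed

lemma pwrc_bounded:
  fixes x :: "real \<Rightarrow> 'a::real_normed_vector"
  assumes px: "pwrc_on a b x"
  shows "\<exists>B. \<forall>s\<in>{a..b}. norm (x s) \<le> B"
proof -
  have "\<forall>t\<in>{a..b}. \<exists>p. fst p > 0 \<and> (\<forall>s\<in>{a..b}. dist s t < fst p \<longrightarrow> norm (x s) \<le> snd p)"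
    using pwrc_local_bound[OF px] by fastforce
  then obtain p where p: "\<And>t. t\<in>{a..b} \<Longrightarrow> fst (p t) > 0 \<and> (\<forall>s\<in>{a..b}. dist s t < fst (p t) \<longrightarrow> norm (x s) \<le> snd (p t))"
    by metis
  have cov: "{a..b} \<subseteq> (\<Union>t\<in>{a..b}. ball t (fst (p t)))"
    using p by (auto intro!: bexI)
  obtain C where C: "C \<subseteq> {a..b}" "finite C" "{a..b} \<subseteq> (\<Union>t\<in>C. ball t (fst (p t)))"
    by (rule compactE_image[OF compact_Icc _ cov]) auto
  show ?thesis
  proof (intro exI ballI)
    fix s assume s: "s \<in> {a..b}"
    then obtain t where t: "t \<in> C" "s \<in> ball t (fst (p t))" using C by blast
    hence "norm (x s) \<le> snd (p t)" using p[of t] C s by (auto simp: dist_commute)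
    also have "\<dots> \<le> Max (snd ` p ` C)" using t C by (intro Max_ge) auto
    finally show "norm (x s) \<le> Max (snd ` p ` C)" .
  qed
qed




lemma dini_step:
  fixes w :: "real \<Rightarrow> real"
  assumes pq: "p \<le> q" and cont: "continuous_on {p..q} w" and w0: "w p \<ge> 0" and e: "\<epsilon> > 0"
    and D: "\<And>t. t \<in> {p..<q} \<Longrightarrow> Limsup (at_right 0) (\<lambda>h. ereal ((w (t+h) - w t)/h)) \<le> ereal (-c * w t)"
  shows "\<forall>t\<in>{p..q}. w t \<le> (w p + \<epsilon>) * exp ((\<epsilon> - c) * (t - p))"
proof (rule ccontr)
  define B where "B t = (w p + \<epsilon>) * exp ((\<epsilon> - c) * (t - p))" for t
  assume "\<not> ?thesis"
  hence ne: "{t\<in>{p..q}. B t < w t} \<noteq> {}" unfolding B_def by force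
  define bad where "bad = {t\<in>{p..q}. B t < w t}"
  define t1 where "t1 = Inf bad"
  have bdd: "bdd_below bad" unfolding bad_def by (rule bdd_belowI[of _ p]) auto
  have nb: "bad \<noteq> {}" using ne bad_def by simp
  have hp: "p \<le> t1" unfolding t1_def using nb by (intro cInf_greatest) (auto simp: bad_def)
  obtain b where b: "b \<in> bad" using nb by blast
  have t1b: "t1 \<le> b" unfolding t1_def using b bdd by (rule cInf_lower)
  have good: "w s \<le> B s" if "p \<le> s" "s < t1" for s
  proof (rule ccontr)
    assume "\<not> w s \<le> B s"
    hence "s \<in> bad" using that t1b b unfolding bad_def by auto
    hence "t1 \<le> s" unfolding t1_def using bdd by (rule cInf_lower)
    with that show False by simp
  qed
  have Bpos: "B t > 0" for t unfolding B_def using w0 e by simp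
  have Bc: "continuous_on UNIV B" unfolding B_def by (intro continuous_intros)
  have wt1: "w t1 \<le> B t1"
  proof (cases "t1 = p")
    case True thus ?thesis using e by (simp add: B_def)
  next
    case False
    hence pt: "p < t1" using hp by simp
    have "t1 \<le> q" using t1b b unfolding bad_def by auto
    hence "{p..t1} \<subseteq> {p..q}" by auto
    hence "continuous_on {p..t1} w" by (rule continuous_on_subset[OF cont])
    hence "continuous (at t1 within {p..t1}) w" using pt
      by (simp add: continuous_on_eq_continuous_within)
    hence l1: "(w \<longlongrightarrow> w t1) (at_left t1)" using at_within_Icc_at_left[OF pt]
      by (simp add: continuous_within)
    have l2: "(B \<longlongrightarrow> B t1) (at_left t1)" using Bc
      by (metis UNIV_I continuous_on_def tendsto_mono at_le subset_UNIV)
    have "eventually (\<lambda>s. w s \<le> B s) (at_left t1)"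
      using eventually_at_left_real[OF pt] by (auto elim!: eventually_mono intro: good)
    thus ?thesis using tendsto_le[OF trivial_limit_at_left_real l2 l1] by simp
  qed
  have t1q: "t1 < q"
  proof -
    have "b \<le> q" using b unfolding bad_def by auto
    moreover have "t1 \<noteq> b" using b wt1 unfolding bad_def by auto
    ultimately show ?thesis using t1b by simp
  qed
  have "Limsup (at_right 0) (\<lambda>h. ereal ((w (t1+h) - w t1)/h)) < ereal (-c * w t1 + \<epsilon> * B t1)"
    using D[of t1] hp t1q Bpos[of t1] e by (auto intro: le_less_trans)
  hence ev1: "eventually (\<lambda>h. ereal ((w (t1+h) - w t1)/h) < ereal (-c * w t1 + \<epsilon> * B t1)) (at_right 0)"
    by (rule Limsup_lessD)
  have "0 < min (q - t1) (1 / (\<bar>c\<bar> + 1))" using t1q by simp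
  from eventually_at_right_real[OF this] have ev2:
    "eventually (\<lambda>h. h < q - t1 \<and> h < 1 / (\<bar>c\<bar> + 1)) (at_right 0)"
    by (auto elim!: eventually_mono)
  from eventually_conj[OF ev1 ev2] obtain \<delta> where d: "\<delta> > 0" and
    dd: "\<And>h. 0 < h \<Longrightarrow> h < \<delta> \<Longrightarrow> (w (t1+h) - w t1)/h < -c * w t1 + \<epsilon> * B t1 \<and> h < q - t1 \<and> h < 1 / (\<bar>c\<bar> + 1)"
    unfolding eventually_at_right_field by auto
  have ok: "w (t1 + h) \<le> B (t1 + h)" if h: "0 < h" "h < \<delta>" for h
  proof -
    from dd[OF h] have q1: "(w (t1+h) - w t1)/h < -c * w t1 + \<epsilon> * B t1"
      and hc: "h < 1 / (\<bar>c\<bar> + 1)" by auto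
    from q1 h have i1: "w (t1+h) - w t1 < h * (-c * w t1 + \<epsilon> * B t1)"
      by (simp add: divide_less_eq mult.commute)
    have "c * h \<le> \<bar>c\<bar> * h" using h by (simp add: mult_right_mono)
    also have "\<bar>c\<bar> * h \<le> 1" using hc h
      by (simp add: field_simps)
    finally have ch: "1 - c * h \<ge> 0" by simp
    have "w t1 * (1 - c * h) \<le> B t1 * (1 - c * h)" using wt1 ch by (rule mult_right_mono)
    have eB: "B (t1 + h) = B t1 * exp ((\<epsilon> - c) * h)"
      unfolding B_def by (simp add: algebra_simps exp_add[symmetric])
    have "B t1 * (1 + (\<epsilon> - c) * h) \<le> B t1 * exp ((\<epsilon> - c) * h)"
      using Bpos[of t1] exp_ge_add_one_self[of "(\<epsilon> - c) * h"] by (simp add: mult_left_mono)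
    with i1 \<open>w t1 * (1 - c * h) \<le> B t1 * (1 - c * h)\<close> eB show ?thesis
      by (simp add: algebra_simps)
  qed
  have "t1 + \<delta> \<le> t1" unfolding t1_def
  proof (rule cInf_greatest[OF nb])
    fix y assume y: "y \<in> bad"
    have "Inf bad \<le> y" using y bdd by (rule cInf_lower)
    hence ty: "t1 \<le> y" by (simp add: t1_def)
    have "y \<noteq> t1" using y wt1 unfolding bad_def by auto
    show "Inf bad + \<delta> \<le> y"
    proof (rule ccontr)
      assume "\<not> Inf bad + \<delta> \<le> y"
      hence "y - t1 < \<delta>" by (simp add: t1_def)
      moreover have "0 < y - t1" using ty \<open>y \<noteq> t1\<close> by simp
      ultimately have "w (t1 + (y - t1)) \<le> B (t1 + (y - t1))" using ok by blast
      thus False using y unfolding bad_def by simp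
    qed
  qed
  with d show False by simp
qed

lemma dini_comparison:
  fixes w :: "real \<Rightarrow> real"
  assumes pq: "p \<le> q" and cont: "continuous_on {p..q} w" and w0: "w p \<ge> 0"
    and D: "\<And>t. t \<in> {p..<q} \<Longrightarrow> Limsup (at_right 0) (\<lambda>h. ereal ((w (t+h) - w t)/h)) \<le> ereal (-c * w t)"
    and t: "t \<in> {p..q}"
  shows "w t \<le> w p * exp (-c * (t - p))"
proof -
  have "((\<lambda>\<epsilon>. (w p + \<epsilon>) * exp ((\<epsilon> - c) * (t - p))) \<longlongrightarrow> (w p + 0) * exp ((0 - c) * (t - p))) (at_right 0)"
    by (intro tendsto_intros tendsto_mono[OF at_le]) auto
  moreover have "eventually (\<lambda>\<epsilon>. w t \<le> (w p + \<epsilon>) * exp ((\<epsilon> - c) * (t - p))) (at_right 0)"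
    using dini_step[OF pq cont w0 _ D] t eventually_at_right_less[of 0] by (auto elim!: eventually_mono)
  ultimately have "w t \<le> (w p + 0) * exp ((0 - c) * (t - p))"
    by (intro tendsto_lowerbound[OF _ _ trivial_limit_at_right_real]) 
  thus ?thesis by simp
qed





definition Lam :: "(nat \<Rightarrow> real) \<Rightarrow> real \<Rightarrow> real \<Rightarrow> real \<Rightarrow> nat \<Rightarrow> real" where
  "Lam tk \<tau> \<sigma> c k = exp (max \<sigma> 0 * (Nimp tk (tk k) (tk k - \<tau>) - 1) + max c 0 * \<tau>)"

locale sysloc =
  fixes f g :: "real \<Rightarrow> (real \<Rightarrow> 'a::real_normed_vector) \<Rightarrow> 'a"
    and \<tau> t0 :: real and tk :: "nat \<Rightarrow> real"
    and V1 :: "real \<Rightarrow> 'a \<Rightarrow> real"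
    and V2 :: "real \<Rightarrow> (real \<Rightarrow> 'a) \<Rightarrow> real"
    and \<alpha>1 \<alpha>2 \<alpha>3 :: "real \<Rightarrow> real"
    and c \<rho>1 \<rho>2 \<kappa> \<sigma> :: real
    and \<phi> :: "real \<Rightarrow> 'a" and T :: ereal and x :: "real \<Rightarrow> 'a"
  assumes tau_pos: "\<tau> > 0"
    and tk0: "tk 0 = t0" and t0_nonneg: "t0 \<ge> 0"
    and tk_mono: "strict_mono tk" and tk_lim: "filterlim tk at_top sequentially"
    and V1_cls: "class_V0 V1" and V2_cls: "class_V0star \<tau> V2"
    and K2: "class_Kinf \<alpha>2" and K3: "class_Kinf \<alpha>3"
    and params: "\<rho>1 \<ge> 0" "\<rho>2 \<ge> 0" "\<kappa> > 0"
    and cond_i: "\<forall>t\<ge>0. \<forall>\<psi>\<in>PC \<tau>.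
        \<alpha>1 (norm (\<psi> 0)) \<le> V1 t (\<psi> 0) \<and> V1 t (\<psi> 0) \<le> \<alpha>2 (norm (\<psi> 0)) \<and>
        0 \<le> V2 t \<psi> \<and> V2 t \<psi> \<le> \<alpha>3 (normtau \<tau> \<psi>)"
    and cond_ii: "\<forall>t\<ge>0. \<forall>\<psi>\<in>PC \<tau>. \<forall>T x. is_sol f g \<tau> tk t \<psi> T x \<longrightarrow>
        Limsup (at_right 0) (\<lambda>h. ereal
           (((V1 (t + h) (x (t + h)) + V2 (t + h) (seg \<tau> x (t + h)))
             - (V1 t (\<psi> 0) + V2 t \<psi>)) / h))
        \<le> ereal (- c * (V1 t (\<psi> 0) + V2 t \<psi>))"
    and cond_iii: "\<forall>t\<ge>0. \<forall>\<psi>\<in>PC \<tau>.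
        V1 t (\<psi> 0 + g t \<psi>) \<le> \<rho>1 * V1left V1 t (\<psi> 0)
          + \<rho>2 * (SUP s\<in>{-\<tau>..0}. V1left V1 (t + s) (\<psi> s))"
    and cond_iv: "\<forall>t\<ge>0. \<forall>\<psi>\<in>PC \<tau>.
        V2 t \<psi> \<le> \<kappa> * (SUP s\<in>{-\<tau>..0}. V1ext V1 (t + s) (\<psi> s))"
    and key: "\<forall>k\<ge>1. (if \<rho>1 \<ge> 1 then \<rho>1 + \<rho>2 * Lam tk \<tau> \<sigma> c k
                     else \<rho>1 + ((1 - \<rho>1) * \<kappa> + \<rho>2) * Lam tk \<tau> \<sigma> c k) \<le> exp (- \<sigma>)"
    and phi: "\<phi> \<in> PC \<tau>" and sol: "is_sol f g \<tau> tk t0 \<phi> T x"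

context sysloc
begin

lemma seg_PC: "pwrc_on (t - \<tau>) t y \<Longrightarrow> seg \<tau> y t \<in> PC \<tau>"
proof -
  assume "pwrc_on (t - \<tau>) t y"
  from pwrc_shift[OF this, of t] have "pwrc_on (-\<tau>) 0 (\<lambda>s. y (t + s))" by simp
  hence "pwrc_on (-\<tau>) 0 (seg \<tau> y t)" by (rule pwrc_cong) (simp add: seg_def)
  thus ?thesis unfolding PC_def seg_def by auto
qed

lemma segm_PC: "pwrc_on (t - \<tau>) t y \<Longrightarrow> segm \<tau> y t \<in> PC \<tau>"
proof -
  assume py: "pwrc_on (t - \<tau>) t y"
  let ?e = "\<lambda>u. if u < t - \<tau> then 0 else if u < t then y u else Lim (at_left t) y"
  have "pwrc_on (t - \<tau>) t ?e" using tau_pos by (intro pwrc_ext[OF py]) auto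
  from pwrc_shift[OF this, of t] have "pwrc_on (-\<tau>) 0 (\<lambda>s. ?e (t + s))" by simp
  hence "pwrc_on (-\<tau>) 0 (segm \<tau> y t)" by (rule pwrc_cong) (use tau_pos in \<open>auto simp: segm_def\<close>)
  thus ?thesis using tau_pos unfolding PC_def segm_def by auto
qed

lemma sol_pwrc: "t0 - \<tau> \<le> b \<Longrightarrow> ereal b < T \<Longrightarrow> pwrc_on (t0 - \<tau>) b x"
  using sol unfolding is_sol_def by auto

lemma t0T: "ereal t0 < T" using sol unfolding is_sol_def by auto

lemma seg_t0: "seg \<tau> x t0 = \<phi>" using sol unfolding is_sol_def by auto

lemma x_init: "r \<in> {-\<tau>..0} \<Longrightarrow> x (t0 + r) = \<phi> r"
  using fun_cong[OF seg_t0, of r] by (simp add: seg_def)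

lemma seg_sol_PC: "t0 \<le> t \<Longrightarrow> ereal t < T \<Longrightarrow> seg \<tau> x t \<in> PC \<tau>"
  using tau_pos by (intro seg_PC pwrc_restrict[OF sol_pwrc[of t]]) auto

lemma segm_sol_PC: "t0 \<le> t \<Longrightarrow> ereal t < T \<Longrightarrow> segm \<tau> x t \<in> PC \<tau>"
  using tau_pos by (intro segm_PC pwrc_restrict[OF sol_pwrc[of t]]) auto

lemma sol_shift: "t0 \<le> t \<Longrightarrow> ereal t < T \<Longrightarrow> is_sol f g \<tau> tk t (seg \<tau> x t) T x"
proof -
  assume t: "t0 \<le> t" "ereal t < T"
  have "pwrc_on (t - \<tau>) b x" if "t - \<tau> \<le> b" "ereal b < T" for b
    using that t by (intro pwrc_restrict[OF sol_pwrc[of b]]) auto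
  thus ?thesis using sol t unfolding is_sol_def by auto
qed

definition W :: "real \<Rightarrow> real" where
  "W t = V1 t (x t) + V2 t (seg \<tau> x t)"

lemma W_dini: "t0 \<le> t \<Longrightarrow> ereal t < T \<Longrightarrow>
   Limsup (at_right 0) (\<lambda>h. ereal ((W (t + h) - W t) / h)) \<le> ereal (- c * W t)"
proof -
  assume t: "t0 \<le> t" "ereal t < T"
  have "seg \<tau> x t 0 = x t" by (simp add: seg_def tau_pos less_imp_le)
  thus ?thesis using cond_ii[rule_format, OF _ seg_sol_PC[OF t] sol_shift[OF t]] t t0_nonneg
    unfolding W_def by simp
qed

lemma V2_nonneg: "t0 \<le> t \<Longrightarrow> ereal t < T \<Longrightarrow> V2 t (seg \<tau> x t) \<ge> 0"
  using cond_i seg_sol_PC t0_nonneg by auto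

lemma V1_lower: "t0 \<le> t \<Longrightarrow> ereal t < T \<Longrightarrow> \<alpha>1 (norm (x t)) \<le> V1 t (x t)"
proof -
  assume t: "t0 \<le> t" "ereal t < T"
  have "seg \<tau> x t 0 = x t" by (simp add: seg_def tau_pos less_imp_le)
  moreover from cond_i[rule_format, of t "seg \<tau> x t"] seg_sol_PC[OF t] t t0_nonneg
  have "\<alpha>1 (norm (seg \<tau> x t 0)) \<le> V1 t (seg \<tau> x t 0)" by auto
  ultimately show ?thesis by simp
qed

lemma V1_le_W: "t0 \<le> t \<Longrightarrow> ereal t < T \<Longrightarrow> V1 t (x t) \<le> W t"
  using V2_nonneg unfolding W_def by auto

lemma V1_nonneg: "t \<ge> 0 \<Longrightarrow> V1 t y \<ge> 0"
  using V1_cls unfolding class_V0_def by auto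

lemma W_nonneg: "t0 \<le> t \<Longrightarrow> ereal t < T \<Longrightarrow> W t \<ge> 0"
  using V2_nonneg V1_nonneg t0_nonneg unfolding W_def by (metis add_nonneg_nonneg order_trans)

lemma tk_le_iff: "tk i \<le> tk j \<longleftrightarrow> i \<le> j" using tk_mono by (rule strict_mono_less_eq)
lemma tk_less_iff: "tk i < tk j \<longleftrightarrow> i < j" using tk_mono by (rule strict_mono_less)

lemma tk_ge_t0: "t0 \<le> tk j" using tk_le_iff[of 0 j] tk0 by simp
lemma tk_Suc_gt: "t0 < tk (Suc j)" using tk_less_iff[of 0 "Suc j"] tk0 by simp

lemma idx_exists: "t0 \<le> u \<Longrightarrow> \<exists>j. tk j \<le> u \<and> u < tk (Suc j)"
proof -
  assume u: "t0 \<le> u"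
  have "eventually (\<lambda>n. tk n > u) sequentially"
    using tk_lim by (simp add: filterlim_at_top_dense)
  then obtain n where n: "tk n > u" by (metis eventually_sequentially order_refl)
  define m where "m = (LEAST n. u < tk n)"
  have m1: "u < tk m" unfolding m_def using n by (rule LeastI)
  have m0: "m \<noteq> 0" using m1 u tk0 by (metis leD)
  then obtain j where j: "m = Suc j" by (cases m) auto
  have "\<not> u < tk j" using not_less_Least[of j "\<lambda>n. u < tk n"] j unfolding m_def by simp
  thus ?thesis using m1 j by (intro exI[of _ j]) auto
qed

lemma not_impulse: "tk j < t \<Longrightarrow> t < tk (Suc j) \<Longrightarrow> t \<notin> range tk"
proof
  assume a: "tk j < t" "t < tk (Suc j)" "t \<in> range tk"
  then obtain i where i: "t = tk i" by auto
  from a i have "j < i" "i < Suc j" using tk_less_iff by auto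
  thus False by simp
qed

lemma Nimp_idx: "tk j \<le> u \<Longrightarrow> u < tk (Suc j) \<Longrightarrow> Nimp tk u t0 = real j"
proof -
  assume u: "tk j \<le> u" "u < tk (Suc j)"
  have "{i. t0 < tk i \<and> tk i \<le> u} = {1..j}"
  proof (intro set_eqI iffI)
    fix i assume "i \<in> {i. t0 < tk i \<and> tk i \<le> u}"
    hence i: "t0 < tk i" "tk i < tk (Suc j)" using u by auto
    have "i \<noteq> 0" using i tk0 by (metis less_irrefl)
    moreover have "i < Suc j" using i tk_less_iff by auto
    ultimately show "i \<in> {1..j}" by auto
  next
    fix i assume "i \<in> {1..j}"
    hence "0 < i" "i \<le> j" by auto
    hence "t0 < tk i" "tk i \<le> tk j" using tk_less_iff[of 0 i] tk0 tk_le_iff by auto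
    thus "i \<in> {i. t0 < tk i \<and> tk i \<le> u}" using u by auto
  qed
  thus ?thesis unfolding Nimp_def by simp
qed

lemma Nk_bound:
  assumes "j' \<le> j" "tk (Suc j) - \<tau> < tk (Suc j')"
  shows "real (j - j') \<le> Nimp tk (tk (Suc j)) (tk (Suc j) - \<tau>) - 1"
proof -
  let ?S = "{i. tk (Suc j) - \<tau> < tk i \<and> tk i \<le> tk (Suc j)}"
  have sub: "{Suc j'..Suc j} \<subseteq> ?S"
  proof
    fix i assume "i \<in> {Suc j'..Suc j}"
    hence "tk (Suc j') \<le> tk i" "tk i \<le> tk (Suc j)" using tk_le_iff by auto
    thus "i \<in> ?S" using assms by auto
  qed
  have fin: "finite ?S" by (rule finite_subset[of _ "{..Suc j}"]) (auto simp: tk_le_iff)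
  have "card {Suc j'..Suc j} \<le> card ?S" by (rule card_mono[OF fin sub])
  hence "j - j' + 1 \<le> card ?S" using assms(1) by simp
  thus ?thesis unfolding Nimp_def using assms(1) by linarith
qed

lemma Nk_ge1: "Nimp tk (tk (Suc j)) (tk (Suc j) - \<tau>) \<ge> 1"
  using Nk_bound[of j j] tau_pos by simp

lemma V1_cont:
  assumes "p \<le> q" "0 \<le> p" "continuous_on {p..q} y"
  shows "continuous_on {p..q} (\<lambda>t. V1 t (y t))"
proof -
  define z where "z t = y (max p (min t q))" for t
  have cz: "continuous_on UNIV z" unfolding z_def
    by (rule continuous_on_compose2[OF assms(3)]) (use assms(1) in \<open>auto intro!: continuous_intros\<close>)
  have "\<forall>b\<ge>0. pwrc_on 0 b z" using cz by (auto intro: cont_pwrc)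
  hence "\<forall>t\<ge>0. continuous (at t within {0..}) z \<longrightarrow> continuous (at t within {0..}) (\<lambda>t. V1 t (z t))"
    using V1_cls unfolding class_V0_def by blast
  moreover have "continuous (at t within {0..}) z" for t
    using cz by (meson UNIV_I continuous_on_eq_continuous_within continuous_within_subset subset_UNIV)
  ultimately have "continuous_on {0..} (\<lambda>t. V1 t (z t))"
    by (simp add: continuous_on_eq_continuous_within)
  hence "continuous_on {p..q} (\<lambda>t. V1 t (z t))" by (rule continuous_on_subset) (use assms in auto)
  thus ?thesis by (rule continuous_on_cong[THEN iffD1, rotated 2]) (auto simp: z_def)
qed

lemma V1ext_isCont: "isCont (\<lambda>u. V1ext V1 u y) r"
proof -
  have "continuous_on {0..0} (\<lambda>_. y)" by simp
  have "continuous_on {0..} (\<lambda>t. V1 t y)"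
  proof -
    have "\<forall>b\<ge>0. pwrc_on 0 b (\<lambda>_::real. y)" by (auto intro: cont_pwrc)
    hence "\<forall>t\<ge>0. continuous (at t within {0..}) (\<lambda>_::real. y) \<longrightarrow> continuous (at t within {0..}) (\<lambda>t. V1 t y)"
      using V1_cls unfolding class_V0_def by blast
    thus ?thesis by (simp add: continuous_on_eq_continuous_within)
  qed
  hence "continuous_on UNIV (\<lambda>u. V1 (max u 0) y)"
    by (rule continuous_on_compose2) (auto intro!: continuous_intros)
  thus ?thesis unfolding V1ext_def by (simp add: continuous_on_eq_continuous_at)
qed

lemma V1left_eq: "V1left V1 r y = V1ext V1 r y"
proof -
  have "((\<lambda>u. V1ext V1 u y) \<longlongrightarrow> V1ext V1 r y) (at_left r)"
    using V1ext_isCont[of r y] unfolding isCont_def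
    by (rule tendsto_mono[rotated]) (rule at_le, simp)
  thus ?thesis unfolding V1left_def by (intro tendsto_Lim) auto
qed

lemma isCont_sol: "t0 < t \<Longrightarrow> ereal t < T \<Longrightarrow> t \<notin> range tk \<Longrightarrow> isCont x t"
  using sol unfolding is_sol_def by blast

lemma right_cont_sol: "t0 \<le> p \<Longrightarrow> p < q \<Longrightarrow> ereal q < T \<Longrightarrow> continuous (at_right p) x"
  using sol_pwrc[of q] tau_pos unfolding pwrc_on_def by auto

lemma x_cont_within:
  assumes "tk j \<le> p" "p \<le> t" "t \<le> q" "q < tk (Suc j)" "ereal q < T" "p < q"
  shows "continuous (at t within {p..q}) x"
proof (cases "t = p")
  case True
  have "continuous (at_right p) x" using right_cont_sol[of p q] assms tk_ge_t0[of j] by auto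
  thus ?thesis using True at_within_Icc_at_right[OF assms(6)] by simp
next
  case False
  hence "tk j < t" using assms by auto
  moreover have "ereal t < T" using assms by (meson ereal_less_eq(3) order.strict_trans1)
  ultimately have "isCont x t" using not_impulse[of j t] assms tk_ge_t0[of j] by (intro isCont_sol) auto
  thus ?thesis by (rule continuous_at_imp_continuous_within)
qed

lemma x_cont:
  assumes "tk j \<le> p" "p \<le> q" "q < tk (Suc j)" "ereal q < T"
  shows "continuous_on {p..q} x"
proof (cases "p = q")
  case True thus ?thesis by simp
next
  case False
  thus ?thesis using x_cont_within[of j p _ q] assms
    by (auto simp: continuous_on_eq_continuous_within)
qed

lemma ev_within_nhds: "eventually P (nhds t) \<Longrightarrow> eventually P (at t within S)"
  by (simp add: eventually_at_filter eventually_mono)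

lemma xL_cont:
  assumes "tk j \<le> p" "p < tk (Suc j)" "ereal (tk (Suc j)) < T"
  shows "continuous_on {p..tk (Suc j)} (\<lambda>t. if t < tk (Suc j) then x t else Lim (at_left (tk (Suc j))) x)"
    (is "continuous_on {p..?s} ?x'")
proof -
  have "continuous (at t within {p..?s}) ?x'" if t: "t \<in> {p..?s}" for t
  proof (cases "t < ?s")
    case True
    have c: "continuous (at t within {p..?s}) x"
    proof (cases "t = p")
      case True
      have "continuous (at_right p) x" using right_cont_sol[of p ?s] assms tk_ge_t0[of j] by auto
      thus ?thesis using True at_within_Icc_at_right[OF assms(2)] by simp
    next
      case False
      hence "tk j < t" using assms t by auto
      moreover have "ereal t < T" using assms t by (meson ereal_less_eq(3) order.strict_trans1 atLeastAtMost_iff)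
      ultimately have "isCont x t" using not_impulse[of j t] True tk_ge_t0[of j] by (intro isCont_sol) auto
      thus ?thesis by (rule continuous_at_imp_continuous_within)
    qed
    have "eventually (\<lambda>y. y \<in> {..<?s}) (nhds t)" using True by (intro eventually_nhds_in_open) auto
    hence "eventually (\<lambda>y. x y = ?x' y) (at t within {p..?s})"
      by (intro ev_within_nhds) (auto elim!: eventually_mono)
    thus ?thesis using c True unfolding continuous_within by (auto intro: Lim_transform_eventually)
  next
    case False
    hence ts: "t = ?s" using t by auto
    have "\<exists>l. (x \<longlongrightarrow> l) (at_left ?s)" using sol_pwrc[of ?s] assms tau_pos tk_ge_t0[of "Suc j"]
      unfolding pwrc_on_def by auto
    hence "(x \<longlongrightarrow> Lim (at_left ?s) x) (at_left ?s)" by (metis tendsto_Lim trivial_limit_at_left_real)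
    moreover have "eventually (\<lambda>y. x y = ?x' y) (at_left ?s)"
      by (auto simp: eventually_at_filter)
    ultimately have "(?x' \<longlongrightarrow> Lim (at_left ?s) x) (at_left ?s)" by (rule Lim_transform_eventually)
    thus ?thesis using ts at_within_Icc_at_left[OF assms(2)] by (simp add: continuous_within)
  qed
  thus ?thesis by (simp add: continuous_on_eq_continuous_within)
qed

definition xe :: "real \<Rightarrow> 'a \<Rightarrow> real \<Rightarrow> 'a" where
  "xe b L = (\<lambda>t. if t < t0 - \<tau> then 0 else if t < b then x t else L)"

lemma V2_cont_xe: "t0 \<le> b \<Longrightarrow> ereal b < T \<Longrightarrow> continuous_on {0..} (\<lambda>t. V2 t (seg \<tau> (xe b L) t))"
proof -
  assume b: "t0 \<le> b" "ereal b < T"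
  have "pwrc_on (t0 - \<tau>) b x" using b tau_pos by (intro sol_pwrc) auto
  hence "\<forall>bb\<ge>-\<tau>. pwrc_on (-\<tau>) bb (xe b L)" unfolding xe_def
    using b t0_nonneg tau_pos by (auto intro!: pwrc_ext)
  thus ?thesis using V2_cls unfolding class_V0star_def by blast
qed

lemma seg_xe: "t0 \<le> t \<Longrightarrow> t < b \<Longrightarrow> seg \<tau> (xe b L) t = seg \<tau> x t"
  by (auto simp: seg_def xe_def fun_eq_iff)

lemma seg_xe_b: "t0 \<le> b \<Longrightarrow> seg \<tau> (xe b (x b)) b = seg \<tau> x b"
  by (auto simp: seg_def xe_def fun_eq_iff)

lemma seg_xe_m: "t0 \<le> b \<Longrightarrow> seg \<tau> (xe b (Lim (at_left b) x)) b = segm \<tau> x b"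
  using tau_pos by (auto simp: seg_def segm_def xe_def fun_eq_iff)

lemma cont_left_lim:
  fixes F :: "real \<Rightarrow> 'b::topological_space" and p s :: real
  assumes "continuous_on {p..s} F" "p < s"
  shows "(F \<longlongrightarrow> F s) (at_left s)"
proof -
  have "continuous (at s within {p..s}) F" using assms
    by (simp add: continuous_on_eq_continuous_within)
  thus ?thesis using at_within_Icc_at_left[OF assms(2)] by (simp add: continuous_within)
qed

lemma W_cont:
  assumes "tk j \<le> p" "p \<le> q" "q < tk (Suc j)" "ereal q < T"
  shows "continuous_on {p..q} W"
proof -
  have p0: "t0 \<le> p" using assms tk_ge_t0[of j] by simp
  have c1: "continuous_on {p..q} (\<lambda>t. V1 t (x t))"
    using V1_cont[OF assms(2) _ x_cont[OF assms]] p0 t0_nonneg by simp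
  have "continuous_on {0..} (\<lambda>t. V2 t (seg \<tau> (xe q (x q)) t))"
    using V2_cont_xe[of q "x q"] assms p0 by simp
  hence "continuous_on {p..q} (\<lambda>t. V2 t (seg \<tau> (xe q (x q)) t))"
    by (rule continuous_on_subset) (use p0 t0_nonneg in auto)
  moreover have "seg \<tau> (xe q (x q)) t = seg \<tau> x t" if "t \<in> {p..q}" for t
    using that p0 seg_xe[of t q "x q"] seg_xe_b[of q] by (cases "t < q") auto
  ultimately have c2: "continuous_on {p..q} (\<lambda>t. V2 t (seg \<tau> x t))"
    by (metis (no_types, lifting) continuous_on_cong)
  show ?thesis unfolding W_def[abs_def] by (intro continuous_on_add c1 c2)
qed

lemma W_left:
  assumes T: "ereal (tk (Suc j)) < T"
  shows "(W \<longlongrightarrow> V1 (tk (Suc j)) (Lim (at_left (tk (Suc j))) x) + V2 (tk (Suc j)) (segm \<tau> x (tk (Suc j))))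
          (at_left (tk (Suc j)))"
proof -
  let ?s = "tk (Suc j)" and ?p = "tk j"
  let ?L = "Lim (at_left ?s) x"
  have ps: "?p < ?s" using tk_less_iff by simp
  have p0: "t0 \<le> ?p" by (rule tk_ge_t0)
  have ev: "eventually (\<lambda>t. ?p < t \<and> t < ?s) (at_left ?s)"
    using eventually_at_left_real[OF ps] by simp
  have "continuous_on {?p..?s} (\<lambda>t. V1 t (if t < ?s then x t else ?L))"
    using V1_cont[OF less_imp_le[OF ps] _ xL_cont[OF order_refl ps T]] p0 t0_nonneg by simp
  from cont_left_lim[OF this ps] have l1: "((\<lambda>t. V1 t (if t < ?s then x t else ?L)) \<longlongrightarrow> V1 ?s ?L) (at_left ?s)"
    by simp
  have l1': "((\<lambda>t. V1 t (x t)) \<longlongrightarrow> V1 ?s ?L) (at_left ?s)"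
    by (rule Lim_transform_eventually[OF l1]) (use ev in \<open>auto elim!: eventually_mono\<close>)
  have "continuous_on {?p..?s} (\<lambda>t. V2 t (seg \<tau> (xe ?s ?L) t))"
    using V2_cont_xe[of ?s ?L] T p0 tk_ge_t0[of "Suc j"]
    by (auto intro: continuous_on_subset[of "{0..}"] simp: order_trans[OF t0_nonneg])
  from cont_left_lim[OF this ps] have l2: "((\<lambda>t. V2 t (seg \<tau> (xe ?s ?L) t)) \<longlongrightarrow> V2 ?s (segm \<tau> x ?s)) (at_left ?s)"
    using seg_xe_m[OF tk_ge_t0[of "Suc j"]] by simp
  have l2': "((\<lambda>t. V2 t (seg \<tau> x t)) \<longlongrightarrow> V2 ?s (segm \<tau> x ?s)) (at_left ?s)"
    by (rule Lim_transform_eventually[OF l2]) (use ev p0 seg_xe in \<open>auto elim!: eventually_mono\<close>)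
  show ?thesis unfolding W_def[abs_def] by (intro tendsto_add l1' l2')
qed

lemma V2_jump:
  assumes T: "ereal (tk (Suc j)) < T"
  shows "V2 (tk (Suc j)) (seg \<tau> x (tk (Suc j))) = V2 (tk (Suc j)) (segm \<tau> x (tk (Suc j)))"
proof -
  let ?s = "tk (Suc j)" and ?p = "tk j"
  have ps: "?p < ?s" using tk_less_iff by simp
  have p0: "t0 \<le> ?p" by (rule tk_ge_t0)
  have ev: "eventually (\<lambda>t. ?p < t \<and> t < ?s) (at_left ?s)"
    using eventually_at_left_real[OF ps] by simp
  have lim: "((\<lambda>t. V2 t (seg \<tau> x t)) \<longlongrightarrow> V2 ?s (seg \<tau> (xe ?s L) ?s)) (at_left ?s)" for L
  proof -
    have "continuous_on {?p..?s} (\<lambda>t. V2 t (seg \<tau> (xe ?s L) t))"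
      using V2_cont_xe[of ?s L] T p0 tk_ge_t0[of "Suc j"]
      by (auto intro: continuous_on_subset[of "{0..}"] simp: order_trans[OF t0_nonneg])
    from cont_left_lim[OF this ps] show ?thesis
      by (rule Lim_transform_eventually) (use ev p0 seg_xe in \<open>auto elim!: eventually_mono\<close>)
  qed
  from tendsto_unique[OF trivial_limit_at_left_real lim[of "x ?s"] lim[of "Lim (at_left ?s) x"]]
  show ?thesis using seg_xe_b[OF tk_ge_t0[of "Suc j"]] seg_xe_m[OF tk_ge_t0[of "Suc j"]] by simp
qed

end



lemma ereal_lt_trans: "(a::real) \<le> b \<Longrightarrow> ereal b < T \<Longrightarrow> ereal a < T"
  by (meson ereal_less_eq(3) order.strict_trans1)

lemma exp_window:
  fixes d e N \<tau> \<sigma> c :: real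
  assumes "0 \<le> d" "d \<le> N - 1" "0 \<le> e" "e \<le> \<tau>"
  shows "\<sigma> * d + c * e \<le> max \<sigma> 0 * (N - 1) + max c 0 * \<tau>"
proof -
  have "\<sigma> * d \<le> max \<sigma> 0 * d" using assms by (intro mult_right_mono) auto
  also have "\<dots> \<le> max \<sigma> 0 * (N - 1)" using assms by (intro mult_left_mono) auto
  finally have 1: "\<sigma> * d \<le> max \<sigma> 0 * (N - 1)" .
  have "c * e \<le> max c 0 * e" using assms by (intro mult_right_mono) auto
  also have "\<dots> \<le> max c 0 * \<tau>" using assms by (intro mult_left_mono) auto
  finally show ?thesis using 1 by simp
qed

lemma Kinf_mono: "class_Kinf \<alpha> \<Longrightarrow> 0 \<le> a \<Longrightarrow> a \<le> b \<Longrightarrow> \<alpha> a \<le> \<alpha> b"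
  unfolding class_Kinf_def by (cases "a = b") (auto simp: strict_mono_on_def intro: less_imp_le)

lemma Kinf_nonneg: "class_Kinf \<alpha> \<Longrightarrow> 0 \<le> a \<Longrightarrow> 0 \<le> \<alpha> a"
  using Kinf_mono[of \<alpha> 0 a] unfolding class_Kinf_def by auto

context sysloc
begin

lemma phi_bdd: "bdd_above ((\<lambda>s. norm (\<phi> s)) ` {-\<tau>..0})"
proof -
  have "pwrc_on (-\<tau>) 0 \<phi>" using phi unfolding PC_def by auto
  from pwrc_bounded[OF this] obtain B where "\<forall>s\<in>{-\<tau>..0}. norm (\<phi> s) \<le> B" by blast
  thus ?thesis by (intro bdd_aboveI[of _ B]) auto
qed

lemma phi_le_normtau: "r \<in> {-\<tau>..0} \<Longrightarrow> norm (\<phi> r) \<le> normtau \<tau> \<phi>"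
  unfolding normtau_def by (rule cSUP_upper[OF _ phi_bdd])

lemma normtau_nonneg: "0 \<le> normtau \<tau> \<phi>"
  using phi_le_normtau[of 0] tau_pos by (meson atLeastAtMost_iff less_imp_le neg_le_0_iff_le norm_ge_zero order_refl order_trans)

definition A :: real where "A = \<alpha>2 (normtau \<tau> \<phi>) + \<alpha>3 (normtau \<tau> \<phi>)"

lemma A_nonneg: "0 \<le> A"
  unfolding A_def using Kinf_nonneg[OF K2 normtau_nonneg] Kinf_nonneg[OF K3 normtau_nonneg] by simp

lemma V1_upper: "0 \<le> t \<Longrightarrow> V1 t y \<le> \<alpha>2 (norm y)"
proof -
  assume t: "0 \<le> t"
  have "continuous_on UNIV (\<lambda>_::real. y)" by simp
  hence "pwrc_on (0 - \<tau>) 0 (\<lambda>_::real. y)" by (rule cont_pwrc)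
  hence "seg \<tau> (\<lambda>_. y) 0 \<in> PC \<tau>" by (intro seg_PC) simp
  moreover have "seg \<tau> (\<lambda>_. y) 0 0 = y" using tau_pos by (simp add: seg_def)
  ultimately show ?thesis using cond_i t by metis
qed

lemma init_V1: "t0 - \<tau> \<le> v \<Longrightarrow> v \<le> t0 \<Longrightarrow> V1ext V1 v (x v) \<le> A"
proof -
  assume v: "t0 - \<tau> \<le> v" "v \<le> t0"
  have "x v = \<phi> (v - t0)" using x_init[of "v - t0"] v by simp
  hence "V1ext V1 v (x v) \<le> \<alpha>2 (norm (\<phi> (v - t0)))" unfolding V1ext_def by (simp add: V1_upper)
  also have "\<dots> \<le> \<alpha>2 (normtau \<tau> \<phi>)" using v by (intro Kinf_mono[OF K2] phi_le_normtau) auto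
  also have "\<dots> \<le> A" unfolding A_def using Kinf_nonneg[OF K3 normtau_nonneg] by simp
  finally show ?thesis .
qed

lemma W_t0: "W t0 \<le> A"
proof -
  have "x t0 = \<phi> 0" using x_init[of 0] tau_pos by simp
  hence "W t0 = V1 t0 (\<phi> 0) + V2 t0 \<phi>" unfolding W_def using seg_t0 by simp
  also have "\<dots> \<le> \<alpha>2 (norm (\<phi> 0)) + \<alpha>3 (normtau \<tau> \<phi>)"
    using cond_i phi t0_nonneg by (meson add_mono)
  also have "\<dots> \<le> A" unfolding A_def using tau_pos
    by (intro add_mono Kinf_mono[OF K2] phi_le_normtau) auto
  finally show ?thesis .
qed

lemma W_between:
  assumes "tk j \<le> p" "p \<le> u" "u < tk (Suc j)" "ereal u < T"
  shows "W u \<le> W p * exp (- c * (u - p))"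
proof -
  have p0: "t0 \<le> p" using assms tk_ge_t0[of j] by simp
  have "ereal p < T" using assms by (meson ereal_less_eq(3) order.strict_trans1)
  hence "W p \<ge> 0" using W_nonneg p0 by simp
  moreover have "Limsup (at_right 0) (\<lambda>h. ereal ((W (t + h) - W t) / h)) \<le> ereal (- c * W t)"
    if "t \<in> {p..<u}" for t
  proof -
    have "ereal t < T" using that assms by (meson atLeastLessThan_iff ereal_less_eq(3) less_imp_le order.strict_trans1)
    thus ?thesis using W_dini[of t] that p0 by simp
  qed
  ultimately show ?thesis using dini_comparison[OF assms(2) W_cont[OF assms(1,2,3,4)]] assms by auto
qed

lemma main_claim:
  "\<forall>j'\<le>j. \<forall>u. tk j' \<le> u \<and> u < tk (Suc j') \<and> ereal u < T \<longrightarrow> W u \<le> A * exp (- \<sigma> * j' - c * (u - t0))"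
proof (induction j)
  case 0
  show ?case
  proof (intro allI impI)
    fix j' u assume a: "j' \<le> 0" "tk j' \<le> u \<and> u < tk (Suc j') \<and> ereal u < T"
    hence j0: "j' = 0" by simp
    have "W u \<le> W t0 * exp (- c * (u - t0))" using W_between[of 0 t0 u] a j0 tk0 by auto
    also have "\<dots> \<le> A * exp (- c * (u - t0))" using W_t0 by simp
    finally show "W u \<le> A * exp (- \<sigma> * j' - c * (u - t0))" using j0 by simp
  qed
next
  case (Suc j)
  note IH = Suc.IH
  show ?case
  proof (intro allI impI)
    fix j' u assume a: "j' \<le> Suc j" "tk j' \<le> u \<and> u < tk (Suc j') \<and> ereal u < T"
    show "W u \<le> A * exp (- \<sigma> * j' - c * (u - t0))"
    proof (cases "j' \<le> j")
      case True thus ?thesis using IH a by blast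
    next
      case False
      hence jj: "j' = Suc j" using a by simp
      define s where "s = tk (Suc j)"
      have us: "s \<le> u" "u < tk (Suc (Suc j))" "ereal u < T" using a jj s_def by auto
      have sT: "ereal s < T" using ereal_lt_trans[of s u T] us by simp
      have s0: "t0 < s" unfolding s_def by (rule tk_Suc_gt)
      have spos: "0 < s" using s0 t0_nonneg by simp
      define Pm where "Pm = exp (- \<sigma> * j - c * (s - t0))"
      define Lm where "Lm = Lam tk \<tau> \<sigma> c (Suc j)"
      define Nk where "Nk = Nimp tk s (s - \<tau>)"
      have Lm_def': "Lm = exp (max \<sigma> 0 * (Nk - 1) + max c 0 * \<tau>)"
        unfolding Lm_def Lam_def Nk_def s_def by simp
      have Nk1: "Nk \<ge> 1" unfolding Nk_def s_def by (rule Nk_ge1)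
      have Lm1: "1 \<le> Lm" unfolding Lm_def' using Nk1 tau_pos by simp
      have Pm0: "0 < Pm" unfolding Pm_def by simp
      have AP0: "0 \<le> A * Pm" using A_nonneg Pm0 by simp
      have win: "V1ext V1 v (x v) \<le> A * Lm * Pm" if v: "s - \<tau> \<le> v" "v < s" for v
      proof (cases "t0 \<le> v")
        case True
        obtain i where i: "tk i \<le> v" "v < tk (Suc i)" using idx_exists[OF True] by blast
        have "tk i < tk (Suc j)" using i(1) v(2) unfolding s_def by linarith
        hence ij: "i \<le> j" using tk_less_iff by simp
        have vT: "ereal v < T" using ereal_lt_trans[of v s T] v sT by simp
        have "V1ext V1 v (x v) = V1 v (x v)" unfolding V1ext_def using True t0_nonneg by simp
        also have "\<dots> \<le> W v" using V1_le_W[OF True vT] .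
        also have "\<dots> \<le> A * exp (- \<sigma> * i - c * (v - t0))" using IH ij i vT by blast
        also have "\<dots> \<le> A * (Lm * Pm)"
        proof -
          have "real (j - i) \<le> Nk - 1" unfolding Nk_def s_def
            using Nk_bound[OF ij] i v unfolding s_def by simp
          hence "\<sigma> * real (j - i) + c * (s - v) \<le> max \<sigma> 0 * (Nk - 1) + max c 0 * \<tau>"
            using v by (intro exp_window) auto
          hence "- \<sigma> * i - c * (v - t0) \<le> (max \<sigma> 0 * (Nk - 1) + max c 0 * \<tau>) + (- \<sigma> * j - c * (s - t0))"
            using ij by (simp add: of_nat_diff algebra_simps)
          hence "exp (- \<sigma> * i - c * (v - t0)) \<le> Lm * Pm"
            unfolding Lm_def' Pm_def by (simp add: exp_add[symmetric])
          thus ?thesis using A_nonneg by (rule mult_left_mono)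
        qed
        finally show ?thesis by simp
      next
        case False
        have "V1ext V1 v (x v) \<le> A" using init_V1[of v] v False s0 by simp
        also have "A \<le> A * (Lm * Pm)"
        proof -
          have "s - \<tau> < tk (Suc 0)" using v False tk_Suc_gt[of 0] by linarith
          hence "real (j - 0) \<le> Nk - 1" unfolding Nk_def using Nk_bound[of 0 j] unfolding s_def by blast
          hence "\<sigma> * real j + c * (s - t0) \<le> max \<sigma> 0 * (Nk - 1) + max c 0 * \<tau>"
            using v False s0 by (intro exp_window) auto
          hence "0 \<le> (max \<sigma> 0 * (Nk - 1) + max c 0 * \<tau>) + (- \<sigma> * j - c * (s - t0))"
            by (simp add: algebra_simps)
          hence "1 \<le> Lm * Pm"
            unfolding Lm_def' Pm_def by (simp add: exp_add[symmetric])
          thus ?thesis using A_nonneg mult_left_mono[of 1 "Lm * Pm" A] by simp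
        qed
        finally show ?thesis by simp
      qed
      define L where "L = Lim (at_left s) x"
      define V2m where "V2m = V2 s (segm \<tau> x s)"
      have V2m0: "0 \<le> V2m" unfolding V2m_def using cond_i[rule_format, of s "segm \<tau> x s"] segm_sol_PC[of s] s0 sT spos by simp
      have Wm: "V1 s L + V2m \<le> A * Pm"
      proof -
        have lim1: "(W \<longlongrightarrow> V1 s L + V2m) (at_left s)"
          using W_left[of j] sT unfolding s_def L_def V2m_def by simp
        have lim2: "((\<lambda>t. A * exp (- \<sigma> * j - c * (t - t0))) \<longlongrightarrow> A * Pm) (at_left s)"
        proof -
          have "isCont (\<lambda>t. A * exp (- \<sigma> * j - c * (t - t0))) s" by (intro continuous_intros)
          hence "((\<lambda>t. A * exp (- \<sigma> * j - c * (t - t0))) \<longlongrightarrow> A * Pm) (at s)"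
            unfolding Pm_def isCont_def by simp
          thus ?thesis by (rule tendsto_mono[rotated]) (rule at_le, simp)
        qed
        have tjs: "tk j < s" using tk_less_iff[of j "Suc j"] s_def by simp
        have "eventually (\<lambda>t. tk j < t \<and> t < s) (at_left s)"
          using eventually_at_left_real[OF tjs] by simp
        hence "eventually (\<lambda>t. W t \<le> A * exp (- \<sigma> * j - c * (t - t0))) (at_left s)"
        proof (rule eventually_mono)
          fix t assume t: "tk j < t \<and> t < s"
          have "ereal t < T" using ereal_lt_trans[of t s T] t sT by simp
          moreover have "tk j \<le> t" "t < tk (Suc j)" using t s_def by auto
          ultimately show "W t \<le> A * exp (- \<sigma> * j - c * (t - t0))" using IH[rule_format, of j t] by simp
        qed
        thus ?thesis using tendsto_le[OF trivial_limit_at_left_real lim2 lim1] by simp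
      qed
      have V1L: "V1 s L \<le> A * Pm" using Wm V2m0 by simp
      have segm0: "segm \<tau> x s 0 = L" unfolding segm_def L_def by simp
      have SUPb: "(SUP r\<in>{-\<tau>..0}. V1ext V1 (s + r) (segm \<tau> x s r)) \<le> A * Lm * Pm"
      proof (rule cSUP_least)
        show "{-\<tau>..0} \<noteq> {}" using tau_pos by simp
        fix r assume r: "r \<in> {-\<tau>..(0::real)}"
        show "V1ext V1 (s + r) (segm \<tau> x s r) \<le> A * Lm * Pm"
        proof (cases "r = 0")
          case True
          have "V1ext V1 (s + r) (segm \<tau> x s r) = V1 s L"
            using True segm0 spos unfolding V1ext_def by simp
          also have "\<dots> \<le> A * Pm" by (rule V1L)
          also have "\<dots> \<le> A * Lm * Pm" using mult_right_mono[OF Lm1 AP0] by (simp add: ac_simps)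
          finally show ?thesis .
        next
          case False
          hence "segm \<tau> x s r = x (s + r)" using r unfolding segm_def by simp
          thus ?thesis using win[of "s + r"] r False by simp
        qed
      qed
      have SUPb': "(SUP r\<in>{-\<tau>..0}. V1left V1 (s + r) (segm \<tau> x s r)) \<le> A * Lm * Pm"
        using SUPb by (simp add: V1left_eq)
      have V2mb: "V2m \<le> \<kappa> * (A * Lm * Pm)"
      proof -
        have "V2m \<le> \<kappa> * (SUP r\<in>{-\<tau>..0}. V1ext V1 (s + r) (segm \<tau> x s r))"
          unfolding V2m_def using cond_iv segm_sol_PC[of s] s0 sT spos by auto
        also have "\<dots> \<le> \<kappa> * (A * Lm * Pm)" using SUPb params by (intro mult_left_mono) auto
        finally show ?thesis .
      qed
      have xs: "x s = L + g s (segm \<tau> x s)"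
        using sol s0 sT unfolding is_sol_def L_def s_def by auto
      have V1s: "V1 s (x s) \<le> \<rho>1 * V1 s L + \<rho>2 * (A * Lm * Pm)"
      proof -
        have "V1 s (x s) \<le> \<rho>1 * V1left V1 s L + \<rho>2 * (SUP r\<in>{-\<tau>..0}. V1left V1 (s + r) (segm \<tau> x s r))"
          using cond_iii[rule_format, of s "segm \<tau> x s"] segm_sol_PC[of s] s0 sT spos xs segm0 by simp
        also have "V1left V1 s L = V1 s L" using V1left_eq spos unfolding V1ext_def by simp
        also have "\<rho>2 * (SUP r\<in>{-\<tau>..0}. V1left V1 (s + r) (segm \<tau> x s r)) \<le> \<rho>2 * (A * Lm * Pm)"
          using SUPb' params by (intro mult_left_mono) auto
        finally show ?thesis by simp
      qed
      have Ws: "W s = V1 s (x s) + V2m"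
        unfolding W_def V2m_def s_def using V2_jump[of j] sT unfolding s_def by simp
      have keyj: "(if \<rho>1 \<ge> 1 then \<rho>1 + \<rho>2 * Lm else \<rho>1 + ((1 - \<rho>1) * \<kappa> + \<rho>2) * Lm) \<le> exp (- \<sigma>)"
        using key unfolding Lm_def by auto
      have Wsb: "W s \<le> A * Pm * exp (- \<sigma>)"
      proof (cases "\<rho>1 \<ge> 1")
        case True
        have "V2m \<le> \<rho>1 * V2m" using mult_right_mono[OF True V2m0] by simp
        hence "W s \<le> \<rho>1 * (V1 s L + V2m) + \<rho>2 * (A * Lm * Pm)" using Ws V1s by (simp add: algebra_simps)
        also have "\<dots> \<le> \<rho>1 * (A * Pm) + \<rho>2 * (A * Lm * Pm)"
          using mult_left_mono[OF Wm params(1)] by simp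
        also have "\<dots> = A * Pm * (\<rho>1 + \<rho>2 * Lm)" by (simp add: algebra_simps)
        also have "\<dots> \<le> A * Pm * exp (- \<sigma>)" using keyj True AP0 by (intro mult_left_mono) auto
        finally show ?thesis .
      next
        case False
        have "W s \<le> \<rho>1 * (V1 s L + V2m) + (1 - \<rho>1) * V2m + \<rho>2 * (A * Lm * Pm)"
          using Ws V1s by (simp add: algebra_simps)
        also have "\<dots> \<le> \<rho>1 * (A * Pm) + (1 - \<rho>1) * (\<kappa> * (A * Lm * Pm)) + \<rho>2 * (A * Lm * Pm)"
        proof -
          have "0 \<le> 1 - \<rho>1" using False by simp
          from mult_left_mono[OF V2mb this] mult_left_mono[OF Wm params(1)] show ?thesis by (simp add: ac_simps)
        qed
        also have "\<dots> = A * Pm * (\<rho>1 + ((1 - \<rho>1) * \<kappa> + \<rho>2) * Lm)" by (simp add: algebra_simps)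
        also have "\<dots> \<le> A * Pm * exp (- \<sigma>)" using keyj False AP0 by (intro mult_left_mono) auto
        finally show ?thesis .
      qed
      have "W u \<le> W s * exp (- c * (u - s))" using W_between[of "Suc j" s u] us s_def by simp
      also have "\<dots> \<le> A * Pm * exp (- \<sigma>) * exp (- c * (u - s))" using Wsb by simp
      also have "\<dots> = A * exp (- \<sigma> * j' - c * (u - t0))"
        unfolding Pm_def jj by (simp add: mult.assoc exp_add[symmetric] algebra_simps)
      finally show ?thesis .
    qed
  qed
qed

lemma W_bound: "t0 \<le> u \<Longrightarrow> ereal u < T \<Longrightarrow> W u \<le> A * exp (- \<sigma> * Nimp tk u t0 - c * (u - t0))"
proof -
  assume u: "t0 \<le> u" "ereal u < T"
  obtain j where j: "tk j \<le> u" "u < tk (Suc j)" using idx_exists[OF u(1)] by blast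
  thus ?thesis using main_claim[of j] u Nimp_idx[OF j] by auto
qed

lemma alpha_bound:
  assumes cv: "\<forall>t s. t0 \<le> s \<and> s < t \<longrightarrow> - \<sigma> * Nimp tk t s - (c - lam) * (t - s) \<le> \<mu>"
    and mu: "\<mu> \<ge> 0" and u: "t0 \<le> u" "ereal u < T"
  shows "\<alpha>1 (norm (x u)) \<le> A * exp \<mu> * exp (- lam * (u - t0))"
proof -
  have ex: "- \<sigma> * Nimp tk u t0 - c * (u - t0) \<le> \<mu> - lam * (u - t0)"
  proof (cases "u = t0")
    case True
    have E: "{k. t0 < tk k \<and> tk k \<le> t0} = {}" by auto
    have "Nimp tk u t0 = 0" unfolding Nimp_def True E by simp
    thus ?thesis using True mu by simp
  next
    case False
    hence "- \<sigma> * Nimp tk u t0 - (c - lam) * (u - t0) \<le> \<mu>" using cv u by auto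
    thus ?thesis by (simp add: algebra_simps)
  qed
  have "\<alpha>1 (norm (x u)) \<le> V1 u (x u)" by (rule V1_lower[OF u])
  also have "\<dots> \<le> W u" by (rule V1_le_W[OF u])
  also have "\<dots> \<le> A * exp (- \<sigma> * Nimp tk u t0 - c * (u - t0))" by (rule W_bound[OF u])
  also have "\<dots> \<le> A * exp (\<mu> - lam * (u - t0))" using ex A_nonneg by (intro mult_left_mono) auto
  also have "\<dots> = A * exp \<mu> * exp (- lam * (u - t0))" by (simp add: exp_add[symmetric] algebra_simps)
  finally show ?thesis .
qed

end




lemma key_from_cases:
  fixes \<rho>1 \<rho>2 \<kappa> \<tau> c \<sigma> :: real and tk :: "nat \<Rightarrow> real"
  assumes "\<rho>1 \<ge> 0" "\<rho>2 \<ge> 0" "\<kappa> > 0" "\<tau> > 0"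
    and cs: "(c > 0 \<and> \<rho>1 \<ge> 1 \<and> \<sigma> = - ln (\<rho>1 + \<rho>2 * exp (c * \<tau>))) \<or>
         (c > 0 \<and> \<rho>1 < 1 \<and> \<rho>1 + ((1 - \<rho>1) * \<kappa> + \<rho>2) * exp (c * \<tau>) \<ge> 1 \<and>
            \<sigma> = - ln (\<rho>1 + ((1 - \<rho>1) * \<kappa> + \<rho>2) * exp (c * \<tau>))) \<or>
         (c > 0 \<and> \<rho>1 < 1 \<and> \<rho>1 + ((1 - \<rho>1) * \<kappa> + \<rho>2) * exp (c * \<tau>) < 1 \<and> \<sigma> > 0 \<and>
            (\<forall>k\<ge>1. \<rho>1 * exp \<sigma> + ((1 - \<rho>1) * \<kappa> + \<rho>2) * exp (c * \<tau>)
                     * exp (\<sigma> * Nimp tk (tk k) (tk k - \<tau>)) \<le> 1)) \<or>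
         (c \<le> 0 \<and> \<rho>1 < 1 \<and> \<rho>1 + (1 - \<rho>1) * \<kappa> + \<rho>2 < 1 \<and> \<sigma> > 0 \<and>
            (\<forall>k\<ge>1. \<rho>1 * exp \<sigma> + ((1 - \<rho>1) * \<kappa> + \<rho>2)
                     * exp (\<sigma> * Nimp tk (tk k) (tk k - \<tau>)) \<le> 1))"
  shows "\<forall>k\<ge>1. (if \<rho>1 \<ge> 1 then \<rho>1 + \<rho>2 * Lam tk \<tau> \<sigma> c k
                     else \<rho>1 + ((1 - \<rho>1) * \<kappa> + \<rho>2) * Lam tk \<tau> \<sigma> c k) \<le> exp (- \<sigma>)"
proof (intro allI impI)
  fix k :: nat assume k: "k \<ge> 1"
  define N where "N = Nimp tk (tk k) (tk k - \<tau>)"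
  define K where "K = (1 - \<rho>1) * \<kappa> + \<rho>2"
  have Lam: "Lam tk \<tau> \<sigma> c k = exp (max \<sigma> 0 * (N - 1) + max c 0 * \<tau>)"
    unfolding Lam_def N_def by simp
  from cs consider
      (1) "c > 0" "\<rho>1 \<ge> 1" "\<sigma> = - ln (\<rho>1 + \<rho>2 * exp (c * \<tau>))"
    | (2) "c > 0" "\<rho>1 < 1" "\<rho>1 + K * exp (c * \<tau>) \<ge> 1" "\<sigma> = - ln (\<rho>1 + K * exp (c * \<tau>))"
    | (3) "c > 0" "\<rho>1 < 1" "\<sigma> > 0" "\<rho>1 * exp \<sigma> + K * exp (c * \<tau>) * exp (\<sigma> * N) \<le> 1"
    | (4) "c \<le> 0" "\<rho>1 < 1" "\<sigma> > 0" "\<rho>1 * exp \<sigma> + K * exp (\<sigma> * N) \<le> 1"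
    unfolding K_def N_def using k by blast
  thus "(if \<rho>1 \<ge> 1 then \<rho>1 + \<rho>2 * Lam tk \<tau> \<sigma> c k
                     else \<rho>1 + ((1 - \<rho>1) * \<kappa> + \<rho>2) * Lam tk \<tau> \<sigma> c k) \<le> exp (- \<sigma>)"
  proof cases
    case 1
    have b1: "1 \<le> \<rho>1 + \<rho>2 * exp (c * \<tau>)" using 1 assms by (simp add: add_increasing2)
    hence "\<sigma> \<le> 0" using 1 by simp
    hence "Lam tk \<tau> \<sigma> c k = exp (c * \<tau>)" unfolding Lam using 1 by (simp add: mult.commute)
    moreover have "exp (- \<sigma>) = \<rho>1 + \<rho>2 * exp (c * \<tau>)" using 1 b1 by simp
    ultimately show ?thesis using 1 by simp
  next
    case 2
    hence "\<sigma> \<le> 0" by simp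
    hence "Lam tk \<tau> \<sigma> c k = exp (c * \<tau>)" unfolding Lam using 2 by (simp add: mult.commute)
    moreover have "exp (- \<sigma>) = \<rho>1 + K * exp (c * \<tau>)" using 2 by simp
    ultimately show ?thesis using 2 unfolding K_def by simp
  next
    case 3
    have "Lam tk \<tau> \<sigma> c k = exp (c * \<tau>) * exp (\<sigma> * N) * exp (- \<sigma>)"
      unfolding Lam using 3 by (simp add: exp_add[symmetric] algebra_simps)
    hence "\<rho>1 + K * Lam tk \<tau> \<sigma> c k = (\<rho>1 * exp \<sigma> + K * exp (c * \<tau>) * exp (\<sigma> * N)) * exp (- \<sigma>)"
      by (simp add: algebra_simps exp_minus field_simps)
    also have "\<dots> \<le> 1 * exp (- \<sigma>)" using 3 by (intro mult_right_mono) auto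
    finally show ?thesis using 3 unfolding K_def by simp
  next
    case 4
    have "Lam tk \<tau> \<sigma> c k = exp (\<sigma> * N) * exp (- \<sigma>)"
      unfolding Lam using 4 by (simp add: exp_add[symmetric] algebra_simps)
    hence "\<rho>1 + K * Lam tk \<tau> \<sigma> c k = (\<rho>1 * exp \<sigma> + K * exp (\<sigma> * N)) * exp (- \<sigma>)"
      by (simp add: algebra_simps exp_minus field_simps)
    also have "\<dots> \<le> 1 * exp (- \<sigma>)" using 4 by (intro mult_right_mono) auto
    finally show ?thesis using 4 unfolding K_def by simp
  qed
qed



lemma exp_decay:
  fixes lam :: real assumes "lam > 0"
  shows "((\<lambda>u. A * exp \<mu> * exp (- lam * (u - t0))) \<longlongrightarrow> (0::real)) at_top"
proof -
  have "filterlim (\<lambda>u. lam * (- t0 + u)) at_top at_top"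
    by (intro filterlim_tendsto_pos_mult_at_top[OF tendsto_const assms]
        filterlim_tendsto_add_at_top[OF tendsto_const filterlim_ident])
  hence "filterlim (\<lambda>u. - (lam * (- t0 + u))) at_bot at_top"
    by (simp add: filterlim_uminus_at_bot)
  hence "((\<lambda>u. exp (- (lam * (- t0 + u)))) \<longlongrightarrow> 0) at_top"
    by (rule filterlim_compose[OF exp_at_bot])
  hence "((\<lambda>u. A * exp \<mu> * exp (- (lam * (- t0 + u)))) \<longlongrightarrow> A * exp \<mu> * 0) at_top"
    by (intro tendsto_mult tendsto_const)
  thus ?thesis by (simp add: algebra_simps)
qed

theorem theorem1:
  fixes f g :: "real \<Rightarrow> (real \<Rightarrow> real ^ 'n) \<Rightarrow> real ^ 'n"
    and \<tau> t0 :: real and tk :: "nat \<Rightarrow> real"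
    and V1 :: "real \<Rightarrow> real ^ 'n \<Rightarrow> real"
    and V2 :: "real \<Rightarrow> (real \<Rightarrow> real ^ 'n) \<Rightarrow> real"
    and \<alpha>1 \<alpha>2 \<alpha>3 :: "real \<Rightarrow> real"
    and c \<rho>1 \<rho>2 \<mu> lam \<kappa> :: real
  assumes tau_pos: "\<tau> > 0"
    and f0: "\<forall>t\<ge>0. f t (\<lambda>s. 0) = 0" and g0: "\<forall>t\<ge>0. g t (\<lambda>s. 0) = 0"
    and tk0: "tk 0 = t0" and t0_nonneg: "t0 \<ge> 0"
    and tk_mono: "strict_mono tk" and tk_lim: "filterlim tk at_top sequentially"
    and sol_exists: "\<forall>s\<ge>0. \<forall>\<phi>\<in>PC \<tau>. \<exists>T x. is_max_sol f g \<tau> tk s \<phi> T x"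
    and sol_unique: "\<forall>s \<phi> T1 T2 x y. is_sol f g \<tau> tk s \<phi> T1 x \<and> is_sol f g \<tau> tk s \<phi> T2 y \<longrightarrow>
                       (\<forall>t. s - \<tau> \<le> t \<and> ereal t < min T1 T2 \<longrightarrow> x t = y t)"
    and sol_bounded_global: "\<forall>s \<phi> T x. is_max_sol f g \<tau> tk s \<phi> T x \<and>
                       bounded (x ` {t. s - \<tau> \<le> t \<and> ereal t < T}) \<longrightarrow> T = \<infinity>"
    and V1_cls: "class_V0 V1" and V2_cls: "class_V0star \<tau> V2"
    and K1: "class_Kinf \<alpha>1" and K2: "class_Kinf \<alpha>2" and K3: "class_Kinf \<alpha>3"
    and params: "\<rho>1 \<ge> 0" "\<rho>2 \<ge> 0" "\<mu> \<ge> 0" "lam > 0" "\<kappa> > 0"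
    and cond_i: "\<forall>t\<ge>0. \<forall>\<psi>\<in>PC \<tau>.
        \<alpha>1 (norm (\<psi> 0)) \<le> V1 t (\<psi> 0) \<and> V1 t (\<psi> 0) \<le> \<alpha>2 (norm (\<psi> 0)) \<and>
        0 \<le> V2 t \<psi> \<and> V2 t \<psi> \<le> \<alpha>3 (normtau \<tau> \<psi>)"
    and cond_ii: "\<forall>t\<ge>0. \<forall>\<psi>\<in>PC \<tau>. \<forall>T x. is_sol f g \<tau> tk t \<psi> T x \<longrightarrow>
        Limsup (at_right 0) (\<lambda>h. ereal
           (((V1 (t + h) (x (t + h)) + V2 (t + h) (seg \<tau> x (t + h)))
             - (V1 t (\<psi> 0) + V2 t \<psi>)) / h))
        \<le> ereal (- c * (V1 t (\<psi> 0) + V2 t \<psi>))"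
    and cond_iii: "\<forall>t\<ge>0. \<forall>\<psi>\<in>PC \<tau>.
        V1 t (\<psi> 0 + g t \<psi>) \<le> \<rho>1 * V1left V1 t (\<psi> 0)
          + \<rho>2 * (SUP s\<in>{-\<tau>..0}. V1left V1 (t + s) (\<psi> s))"
    and cond_iv: "\<forall>t\<ge>0. \<forall>\<psi>\<in>PC \<tau>.
        V2 t \<psi> \<le> \<kappa> * (SUP s\<in>{-\<tau>..0}. V1ext V1 (t + s) (\<psi> s))"
    and cond_v: "\<exists>\<sigma>::real.
        (\<forall>t s. t0 \<le> s \<and> s < t \<longrightarrow> - \<sigma> * Nimp tk t s - (c - lam) * (t - s) \<le> \<mu>) \<and>
        ((c > 0 \<and> \<rho>1 \<ge> 1 \<and> \<sigma> = - ln (\<rho>1 + \<rho>2 * exp (c * \<tau>))) \<or>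
         (c > 0 \<and> \<rho>1 < 1 \<and> \<rho>1 + ((1 - \<rho>1) * \<kappa> + \<rho>2) * exp (c * \<tau>) \<ge> 1 \<and>
            \<sigma> = - ln (\<rho>1 + ((1 - \<rho>1) * \<kappa> + \<rho>2) * exp (c * \<tau>))) \<or>
         (c > 0 \<and> \<rho>1 < 1 \<and> \<rho>1 + ((1 - \<rho>1) * \<kappa> + \<rho>2) * exp (c * \<tau>) < 1 \<and> \<sigma> > 0 \<and>
            (\<forall>k\<ge>1. \<rho>1 * exp \<sigma> + ((1 - \<rho>1) * \<kappa> + \<rho>2) * exp (c * \<tau>)
                     * exp (\<sigma> * Nimp tk (tk k) (tk k - \<tau>)) \<le> 1)) \<or>
         (c \<le> 0 \<and> \<rho>1 < 1 \<and> \<rho>1 + (1 - \<rho>1) * \<kappa> + \<rho>2 < 1 \<and> \<sigma> > 0 \<and>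
            (\<forall>k\<ge>1. \<rho>1 * exp \<sigma> + ((1 - \<rho>1) * \<kappa> + \<rho>2)
                     * exp (\<sigma> * Nimp tk (tk k) (tk k - \<tau>)) \<le> 1)))"
  shows "(\<forall>\<epsilon>>0. \<exists>\<delta>>0. \<forall>\<phi>\<in>PC \<tau>. normtau \<tau> \<phi> < \<delta> \<longrightarrow>
            (\<forall>T x. is_sol f g \<tau> tk t0 \<phi> T x \<longrightarrow>
               (\<forall>t. t0 \<le> t \<and> ereal t < T \<longrightarrow> norm (x t) < \<epsilon>))) \<and>
         (\<forall>\<phi>\<in>PC \<tau>. \<forall>T x. is_max_sol f g \<tau> tk t0 \<phi> T x \<longrightarrow>
            T = \<infinity> \<and> (x \<longlongrightarrow> 0) at_top)"
  proof -
  obtain \<sigma> where cv: "\<forall>t s. t0 \<le> s \<and> s < t \<longrightarrow> - \<sigma> * Nimp tk t s - (c - lam) * (t - s) \<le> \<mu>"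
    and cs: "(c > 0 \<and> \<rho>1 \<ge> 1 \<and> \<sigma> = - ln (\<rho>1 + \<rho>2 * exp (c * \<tau>))) \<or>
         (c > 0 \<and> \<rho>1 < 1 \<and> \<rho>1 + ((1 - \<rho>1) * \<kappa> + \<rho>2) * exp (c * \<tau>) \<ge> 1 \<and>
            \<sigma> = - ln (\<rho>1 + ((1 - \<rho>1) * \<kappa> + \<rho>2) * exp (c * \<tau>))) \<or>
         (c > 0 \<and> \<rho>1 < 1 \<and> \<rho>1 + ((1 - \<rho>1) * \<kappa> + \<rho>2) * exp (c * \<tau>) < 1 \<and> \<sigma> > 0 \<and>
            (\<forall>k\<ge>1. \<rho>1 * exp \<sigma> + ((1 - \<rho>1) * \<kappa> + \<rho>2) * exp (c * \<tau>)
                     * exp (\<sigma> * Nimp tk (tk k) (tk k - \<tau>)) \<le> 1)) \<or>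
         (c \<le> 0 \<and> \<rho>1 < 1 \<and> \<rho>1 + (1 - \<rho>1) * \<kappa> + \<rho>2 < 1 \<and> \<sigma> > 0 \<and>
            (\<forall>k\<ge>1. \<rho>1 * exp \<sigma> + ((1 - \<rho>1) * \<kappa> + \<rho>2)
                     * exp (\<sigma> * Nimp tk (tk k) (tk k - \<tau>)) \<le> 1))"
    using cond_v by blast
  have key: "\<forall>k\<ge>1. (if \<rho>1 \<ge> 1 then \<rho>1 + \<rho>2 * Lam tk \<tau> \<sigma> c k
                     else \<rho>1 + ((1 - \<rho>1) * \<kappa> + \<rho>2) * Lam tk \<tau> \<sigma> c k) \<le> exp (- \<sigma>)"
    by (rule key_from_cases[OF params(1,2,5) tau_pos cs])
  have loc: "sysloc f g \<tau> t0 tk V1 V2 \<alpha>1 \<alpha>2 \<alpha>3 c \<rho>1 \<rho>2 \<kappa> \<sigma> \<phi> T x"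
    if "\<phi> \<in> PC \<tau>" "is_sol f g \<tau> tk t0 \<phi> T x" for \<phi> T x
    unfolding sysloc_def using that tau_pos tk0 t0_nonneg tk_mono tk_lim V1_cls V2_cls K2 K3 params(1,2,5)
        cond_i cond_ii cond_iii cond_iv key by (intro conjI) assumption+
  have bound: "\<alpha>1 (norm (x u)) \<le> (\<alpha>2 (normtau \<tau> \<phi>) + \<alpha>3 (normtau \<tau> \<phi>)) * exp \<mu> * exp (- lam * (u - t0))"
    if "\<phi> \<in> PC \<tau>" "is_sol f g \<tau> tk t0 \<phi> T x" "t0 \<le> u" "ereal u < T" for \<phi> T x u
    using sysloc.alpha_bound[OF loc[OF that(1,2)] cv params(3) that(3,4)]
    unfolding sysloc.A_def[OF loc[OF that(1,2)]] .
  have ntnn: "0 \<le> normtau \<tau> \<phi>" if "\<phi> \<in> PC \<tau>" "is_sol f g \<tau> tk t0 \<phi> T x" for \<phi> T x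
    by (rule sysloc.normtau_nonneg[OF loc[OF that]])
  have a1pos: "0 < \<alpha>1 e" if "e > 0" for e
  proof -
    have sm: "strict_mono_on {0..} \<alpha>1" using K1 unfolding class_Kinf_def by simp
    have "\<alpha>1 0 < \<alpha>1 e" by (rule strict_mono_onD[OF sm]) (use that in auto)
    thus ?thesis using K1 unfolding class_Kinf_def by simp
  qed
  have a1inv: "norm v < e" if "\<alpha>1 (norm v) < \<alpha>1 e" "e > 0" for v :: "real ^ 'n" and e
  proof (rule ccontr)
    assume "\<not> norm v < e"
    hence "\<alpha>1 e \<le> \<alpha>1 (norm v)" using that by (intro Kinf_mono[OF K1]) auto
    thus False using that by simp
  qed
  have A0: "0 \<le> \<alpha>2 r + \<alpha>3 r" if "0 \<le> r" for r
    using Kinf_nonneg[OF K2 that] Kinf_nonneg[OF K3 that] by simp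
  have stab: "\<forall>\<epsilon>>0. \<exists>\<delta>>0. \<forall>\<phi>\<in>PC \<tau>. normtau \<tau> \<phi> < \<delta> \<longrightarrow>
            (\<forall>T x. is_sol f g \<tau> tk t0 \<phi> T x \<longrightarrow>
               (\<forall>t. t0 \<le> t \<and> ereal t < T \<longrightarrow> norm (x t) < \<epsilon>))"
  proof (intro allI impI)
    fix \<epsilon> :: real assume e: "\<epsilon> > 0"
    define \<eta> where "\<eta> = \<alpha>1 \<epsilon> * exp (- \<mu>)"
    have eta: "\<eta> > 0" unfolding \<eta>_def using a1pos[OF e] by simp
    have hc: "continuous_on {0..} (\<lambda>r. \<alpha>2 r + \<alpha>3 r)"
      using K2 K3 unfolding class_Kinf_def by (intro continuous_on_add) auto
    hence "continuous (at 0 within {0..}) (\<lambda>r. \<alpha>2 r + \<alpha>3 r)"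
      by (simp add: continuous_on_eq_continuous_within)
    hence "((\<lambda>r. \<alpha>2 r + \<alpha>3 r) \<longlongrightarrow> 0) (at 0 within {0..})"
      using K2 K3 unfolding class_Kinf_def by (simp add: continuous_within)
    hence "((\<lambda>r. \<alpha>2 r + \<alpha>3 r) \<longlongrightarrow> 0) (at_right 0)"
      by (rule tendsto_mono[rotated]) (rule at_le, auto)
    hence "eventually (\<lambda>r. \<alpha>2 r + \<alpha>3 r < \<eta>) (at_right 0)"
      using eta by (rule order_tendstoD)
    then obtain b where b: "b > 0" "\<forall>r>0. r < b \<longrightarrow> \<alpha>2 r + \<alpha>3 r < \<eta>"
      unfolding eventually_at_right_field by auto
    define \<delta> where "\<delta> = b / 2"
    have d: "\<delta> > 0" "\<alpha>2 \<delta> + \<alpha>3 \<delta> < \<eta>" using b unfolding \<delta>_def by auto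
    show "\<exists>\<delta>>0. \<forall>\<phi>\<in>PC \<tau>. normtau \<tau> \<phi> < \<delta> \<longrightarrow>
            (\<forall>T x. is_sol f g \<tau> tk t0 \<phi> T x \<longrightarrow>
               (\<forall>t. t0 \<le> t \<and> ereal t < T \<longrightarrow> norm (x t) < \<epsilon>))"
    proof (intro exI[of _ \<delta>] conjI ballI impI allI)
      show "\<delta> > 0" by (rule d(1))
      fix \<phi> T x t
      assume phi: "\<phi> \<in> PC \<tau>" and nt: "normtau \<tau> \<phi> < \<delta>" and sl: "is_sol f g \<tau> tk t0 \<phi> T x"
        and t: "t0 \<le> t \<and> ereal t < T"
      have n0: "0 \<le> normtau \<tau> \<phi>" by (rule ntnn[OF phi sl])
      have Ale: "\<alpha>2 (normtau \<tau> \<phi>) + \<alpha>3 (normtau \<tau> \<phi>) \<le> \<alpha>2 \<delta> + \<alpha>3 \<delta>"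
        using n0 nt by (intro add_mono Kinf_mono[OF K2] Kinf_mono[OF K3]) auto
      have "\<alpha>1 (norm (x t)) \<le> (\<alpha>2 (normtau \<tau> \<phi>) + \<alpha>3 (normtau \<tau> \<phi>)) * exp \<mu> * exp (- lam * (t - t0))"
        using bound[OF phi sl] t by auto
      also have "\<dots> \<le> (\<alpha>2 (normtau \<tau> \<phi>) + \<alpha>3 (normtau \<tau> \<phi>)) * exp \<mu> * 1"
        using t params(4) A0[OF n0] by (intro mult_left_mono) auto
      also have "\<dots> \<le> (\<alpha>2 \<delta> + \<alpha>3 \<delta>) * exp \<mu>" using Ale by simp
      also have "\<dots> < \<eta> * exp \<mu>" using d by simp
      also have "\<dots> = \<alpha>1 \<epsilon>" unfolding \<eta>_def by (simp add: exp_minus)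
      finally show "norm (x t) < \<epsilon>" using a1inv e by blast
    qed
  qed
  have attr: "\<forall>\<phi>\<in>PC \<tau>. \<forall>T x. is_max_sol f g \<tau> tk t0 \<phi> T x \<longrightarrow> T = \<infinity> \<and> (x \<longlongrightarrow> 0) at_top"
  proof (intro ballI allI impI)
    fix \<phi> T x assume phi: "\<phi> \<in> PC \<tau>" and ms: "is_max_sol f g \<tau> tk t0 \<phi> T x"
    have sl: "is_sol f g \<tau> tk t0 \<phi> T x" using ms unfolding is_max_sol_def by simp
    define A where "A = \<alpha>2 (normtau \<tau> \<phi>) + \<alpha>3 (normtau \<tau> \<phi>)"
    have A0': "0 \<le> A" unfolding A_def by (rule A0[OF ntnn[OF phi sl]])
    have bd: "\<alpha>1 (norm (x u)) \<le> A * exp \<mu>" if "t0 \<le> u" "ereal u < T" for u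
    proof -
      have "\<alpha>1 (norm (x u)) \<le> A * exp \<mu> * exp (- lam * (u - t0))"
        using bound[OF phi sl that] unfolding A_def .
      also have "\<dots> \<le> A * exp \<mu> * 1" using that params(4) A0' by (intro mult_left_mono) auto
      finally show ?thesis by simp
    qed
    obtain R where R: "R \<ge> 0" "\<alpha>1 R > A * exp \<mu>" using K1 unfolding class_Kinf_def by blast
    have "norm (x u) \<le> max R (normtau \<tau> \<phi>)" if "t0 - \<tau> \<le> u" "ereal u < T" for u
    proof (cases "t0 \<le> u")
      case True
      have "\<alpha>1 (norm (x u)) < \<alpha>1 R" using bd[OF True that(2)] R(2) by simp
      moreover have "R > 0"
      proof (rule ccontr)
        assume "\<not> R > 0" hence "R = 0" using R(1) by simp
        hence "\<alpha>1 R = 0" using K1 unfolding class_Kinf_def by simp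
        moreover have "0 \<le> \<alpha>1 (norm (x u))" using Kinf_nonneg[OF K1] by simp
        ultimately show False using \<open>\<alpha>1 (norm (x u)) < \<alpha>1 R\<close> by simp
      qed
      ultimately have "norm (x u) < R" using a1inv by blast
      thus ?thesis by simp
    next
      case False
      have "x u = \<phi> (u - t0)" using sysloc.x_init[OF loc[OF phi sl], of "u - t0"] that False by simp
      also have "norm \<dots> \<le> normtau \<tau> \<phi>"
        using sysloc.phi_le_normtau[OF loc[OF phi sl], of "u - t0"] that False by simp
      finally show ?thesis by simp
    qed
    hence "bounded (x ` {t. t0 - \<tau> \<le> t \<and> ereal t < T})"
      unfolding bounded_iff by blast
    hence Tinf: "T = \<infinity>" using sol_bounded_global ms by blast
    have "(x \<longlongrightarrow> 0) at_top"
    proof (rule tendstoI)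
      fix e :: real assume e: "e > 0"
      have "((\<lambda>u. A * exp \<mu> * exp (- lam * (u - t0))) \<longlongrightarrow> 0) at_top"
        by (rule exp_decay[OF params(4)])
      hence "eventually (\<lambda>u. A * exp \<mu> * exp (- lam * (u - t0)) < \<alpha>1 e) at_top"
        using a1pos[OF e] by (rule order_tendstoD)
      moreover have "eventually (\<lambda>u. t0 \<le> u) at_top" by (rule eventually_ge_at_top)
      ultimately show "eventually (\<lambda>u. dist (x u) 0 < e) at_top"
      proof eventually_elim
        case (elim u)
        have "\<alpha>1 (norm (x u)) \<le> A * exp \<mu> * exp (- lam * (u - t0))"
          using bound[OF phi sl] elim Tinf unfolding A_def by simp
        hence "\<alpha>1 (norm (x u)) < \<alpha>1 e" using elim by simp
        thus ?case using a1inv e by simp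
      qed
    qed
    thus "T = \<infinity> \<and> (x \<longlongrightarrow> 0) at_top" using Tinf by simp
  qed
  show ?thesis using stab attr by blast
qed


end
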